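(* Let $L:G\to[0,\infty)$ be proper. (1) If $G$ has polynomial H-growth with respect to $L$, then there exists $s>0$ such that for every normalized 2-cocycle $\sigma$ and every $x\in C^*_r(G,\sigma)$ with $\sum_{g\in G}|\widehat x(g)|^2(1+L(g))^s<\infty$, the Fourier series of $x$ converges to $x$ in operator norm. (2) If $G$ has subexponential H-growth with respect to $L$, then for every normalized 2-cocycle $\sigma$ and every $x\in C^*_r(G,\sigma)$ such that $\sum_{g\in G}|\widehat x(g)|^2\exp(tL(g))<\infty$ for some $t>0$, the Fourier series of $x$ converges to $x$ in operator norm.
   Context: $G$ is a countable discrete group with identity $e$; $\sigma:G\times G\to\mathbb{T}$ is a normalized 2-cocycle ($\sigma(g,h)\sigma(gh,k)=\sigma(h,k)\sigma(g,hk)$, $\sigma(g,e)=\sigma(e,g)=1$); $\Lambda_\sigma(g)$ is the unitary on $\ell^2(G)$ with $(\Lambda_\sigma(g)\xi)(h)=\sigma(g,g^{-1}h)\xi(g^{-1}h)$; $\lambda=\Lambda_1$. $C^*_r(G,\sigma)$ is the operator-norm closed $*$-algebra generated by $\Lambda_\sigma(G)$ in $B(\ell^2(G))$. For $x\in C^*_r(G,\sigma)$, $\widehat x=x\delta_e\in\ell^2(G)$, and its Fourier series is $\sum_g\widehat x(g)\Lambda_\sigma(g)$ (convergence meaning convergence of the net of finite partial sums). $L$ proper means $L^{-1}([0,t])$ finite for all $t$. $\mathcal{K}(G)$ = finitely supported functions; $\pi_\lambda(f)=\sum_g f(g)\lambda(g)$. The Haagerup content of a finite nonempty $E\subseteq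 G$ is $c(E)=\sup\{\|\pi_\lambda(f)\|\mid f\in\mathcal{K}(G),\ \mathrm{supp}f\subseteq E,\ \|f\|_2=1\}$. With $B_{r,L}=\{g\mid L(g)\le r\}$: polynomial H-growth w.r.t. $L$ means $c(B_{r,L})\le K(1+r)^p$ for some $K,p>0$ and all $r\ge0$; subexponential H-growth means for every $b>1$ there is $r_0$ with $c(B_{r,L})<b^r$ for $r\ge r_0$. *)

theory Defs
  imports "HOL-Analysis.Analysis" "HOL-Library.Countable"
begin

text \<open>The discrete group G is a type of class group_add (written additively:
identity 0, product g + h, inverse - g; commutativity is NOT assumed) and countable.\<close>

definition ell2 :: "('g \<Rightarrow> complex) set" where
  "ell2 = {\<xi>. (\<lambda>g. (cmod (\<xi> g))^2) summable_on UNIV}"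

definition l2norm :: "('g \<Rightarrow> complex) \<Rightarrow> real" where
  "l2norm \<xi> = sqrt (infsum (\<lambda>g. (cmod (\<xi> g))^2) UNIV)"

definition l2inner :: "('g \<Rightarrow> complex) \<Rightarrow> ('g \<Rightarrow> complex) \<Rightarrow> complex" where
  "l2inner \<xi> \<eta> = infsum (\<lambda>g. \<xi> g * cnj (\<eta> g)) UNIV"

type_synonym 'g op = "('g \<Rightarrow> complex) \<Rightarrow> ('g \<Rightarrow> complex)"

definition bounded_op :: "'g op \<Rightarrow> bool" where
  "bounded_op T \<longleftrightarrow> (\<forall>\<xi>\<in>ell2. T \<xi> \<in> ell2) \<and>
     (\<exists>M. \<forall>\<xi>\<in>ell2. l2norm (T \<xi>) \<le> M * l2norm \<xi>)"

text \<open>Operator norm on ell2 (meaningful for bounded operators).\<close>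
definition opnorm :: "'g op \<Rightarrow> real" where
  "opnorm T = Sup {l2norm (T \<xi>) / l2norm \<xi> | \<xi>. \<xi> \<in> ell2 \<and> \<xi> \<noteq> (\<lambda>_. 0)}"

definition normalized_2cocycle :: "('g::group_add \<Rightarrow> 'g \<Rightarrow> complex) \<Rightarrow> bool" where
  "normalized_2cocycle \<sigma> \<longleftrightarrow>
     (\<forall>g h. cmod (\<sigma> g h) = 1) \<and>
     (\<forall>g h k. \<sigma> g h * \<sigma> (g + h) k = \<sigma> h k * \<sigma> g (h + k)) \<and>
     (\<forall>g. \<sigma> g 0 = 1 \<and> \<sigma> 0 g = 1)"

definition Lam :: "('g::group_add \<Rightarrow> 'g \<Rightarrow> complex) \<Rightarrow> 'g \<Rightarrow> 'g op" where
  "Lam \<sigma> g = (\<lambda>\<xi> h. \<sigma> g (- g + h) * \<xi> (- g + h))"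

definition lreg :: "'g::group_add \<Rightarrow> 'g op" where
  "lreg = Lam (\<lambda>_ _. 1)"

text \<open>Reduced twisted group C*-algebra: operator-norm closed *-algebra generated by Lam sigma G.\<close>
inductive_set twisted_Cr :: "('g::group_add \<Rightarrow> 'g \<Rightarrow> complex) \<Rightarrow> 'g op set"
  for \<sigma> where
  gen: "Lam \<sigma> g \<in> twisted_Cr \<sigma>"
| add: "T \<in> twisted_Cr \<sigma> \<Longrightarrow> S \<in> twisted_Cr \<sigma> \<Longrightarrow> (\<lambda>\<xi> h. T \<xi> h + S \<xi> h) \<in> twisted_Cr \<sigma>"
| scale: "T \<in> twisted_Cr \<sigma> \<Longrightarrow> (\<lambda>\<xi> h. c * T \<xi> h) \<in> twisted_Cr \<sigma>"
| comp: "T \<in> twisted_Cr \<sigma> \<Longrightarrow> S \<in> twisted_Cr \<sigma> \<Longrightarrow> (\<lambda>\<xi>. T (S \<xi>)) \<in> twisted_Cr \<sigma>"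
| adj: "T \<in> twisted_Cr \<sigma> \<Longrightarrow> bounded_op S \<Longrightarrow>
        (\<forall>\<xi>\<in>ell2. \<forall>\<eta>\<in>ell2. l2inner (T \<xi>) \<eta> = l2inner \<xi> (S \<eta>)) \<Longrightarrow> S \<in> twisted_Cr \<sigma>"
| lim: "(\<And>n. Ts n \<in> twisted_Cr \<sigma>) \<Longrightarrow> bounded_op T \<Longrightarrow>
        (\<lambda>n. opnorm (\<lambda>\<xi> h. Ts n \<xi> h - T \<xi> h)) \<longlonglongrightarrow> 0 \<Longrightarrow> T \<in> twisted_Cr \<sigma>"

definition delta_e :: "'g::group_add \<Rightarrow> complex" where
  "delta_e = (\<lambda>h. if h = 0 then 1 else 0)"

definition fourier_coeff :: "'g::group_add op \<Rightarrow> 'g \<Rightarrow> complex" where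
  "fourier_coeff x = x delta_e"

definition fourier_partial :: "('g::group_add \<Rightarrow> 'g \<Rightarrow> complex) \<Rightarrow> 'g op \<Rightarrow> 'g set \<Rightarrow> 'g op" where
  "fourier_partial \<sigma> x F = (\<lambda>\<xi> h. \<Sum>g\<in>F. fourier_coeff x g * Lam \<sigma> g \<xi> h)"

definition fourier_series_converges :: "('g::group_add \<Rightarrow> 'g \<Rightarrow> complex) \<Rightarrow> 'g op \<Rightarrow> bool" where
  "fourier_series_converges \<sigma> x \<longleftrightarrow>
     ((\<lambda>F. opnorm (\<lambda>\<xi> h. fourier_partial \<sigma> x F \<xi> h - x \<xi> h)) \<longlongrightarrow> 0)
       (finite_subsets_at_top UNIV)"

definition proper_length :: "('g \<Rightarrow> real) \<Rightarrow> bool" where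
  "proper_length L \<longleftrightarrow> (\<forall>g. L g \<ge> 0) \<and> (\<forall>t. finite {g. L g \<le> t})"

definition pi_lambda :: "('g::group_add \<Rightarrow> complex) \<Rightarrow> 'g op" where
  "pi_lambda f = (\<lambda>\<xi> h. \<Sum>g\<in>{g. f g \<noteq> 0}. f g * lreg g \<xi> h)"

definition haagerup_content :: "'g::group_add set \<Rightarrow> real" where
  "haagerup_content E = (if E = {} then 0 else
     Sup {opnorm (pi_lambda f) | f. finite {g. f g \<noteq> 0} \<and> {g. f g \<noteq> 0} \<subseteq> E \<and> l2norm f = 1})"

definition ball_L :: "('g \<Rightarrow> real) \<Rightarrow> real \<Rightarrow> 'g set" where
  "ball_L L r = {g. L g \<le> r}"

definition poly_H_growth :: "('g::group_add \<Rightarrow> real) \<Rightarrow> bool" where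
  "poly_H_growth L \<longleftrightarrow> (\<exists>K p. K > 0 \<and> p > 0 \<and>
     (\<forall>r\<ge>0. haagerup_content (ball_L L r) \<le> K * (1 + r) powr p))"

definition subexp_H_growth :: "('g::group_add \<Rightarrow> real) \<Rightarrow> bool" where
  "subexp_H_growth L \<longleftrightarrow> (\<forall>b>1. \<exists>r0. \<forall>r\<ge>r0. haagerup_content (ball_L L r) < b powr r)"

end

theory Submission
  imports Defs
begin
lemma l2norm_sq: "(l2norm \<xi>)^2 = infsum (\<lambda>g. (cmod (\<xi> g))^2) UNIV"
  unfolding l2norm_def by (simp add: infsum_nonneg)

lemma l2norm_nonneg: "l2norm \<xi> \<ge> 0"
  unfolding l2norm_def by (intro real_sqrt_ge_zero infsum_nonneg) simp

lemma ell2_fin_le: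
  assumes "\<xi> \<in> ell2" "finite F"
  shows "(\<Sum>g\<in>F. (cmod (\<xi> g))^2) \<le> (l2norm \<xi>)^2"
  unfolding l2norm_sq
  using assms by (intro finite_sum_le_infsum) (auto simp: ell2_def)

lemma ell2_I:
  assumes "\<And>F. finite F \<Longrightarrow> (\<Sum>g\<in>F. (cmod (\<xi> g))^2) \<le> C"
  shows "\<xi> \<in> ell2" "(l2norm \<xi>)^2 \<le> C"
proof -
  have s: "(\<lambda>g. (cmod (\<xi> g))^2) summable_on UNIV"
    by (rule nonneg_bdd_above_summable_on) (auto intro!: bdd_aboveI[where M=C] assms)
  then show "\<xi> \<in> ell2" by (simp add: ell2_def)
  show "(l2norm \<xi>)^2 \<le> C" unfolding l2norm_sq
    using s by (subst infsum_nonneg_is_SUPREMUM_real) (auto intro!: cSUP_least assms)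
qed

lemma ell2_I':
  assumes "\<And>F. finite F \<Longrightarrow> (\<Sum>g\<in>F. (cmod (\<xi> g))^2) \<le> D^2" "D \<ge> 0"
  shows "\<xi> \<in> ell2" "l2norm \<xi> \<le> D"
  using ell2_I[OF assms(1)] assms(2) l2norm_nonneg[of \<xi>]
  by (auto simp: power_mono_iff)

lemma ell2_L2_le:
  assumes "\<xi> \<in> ell2" "finite F"
  shows "L2_set (\<lambda>g. cmod (\<xi> g)) F \<le> l2norm \<xi>"
  using ell2_fin_le[OF assms] l2norm_nonneg[of \<xi>] unfolding L2_set_def
  by (simp add: real_le_lsqrt)

lemma ell2_I_L2:
  assumes "\<And>F. finite F \<Longrightarrow> L2_set (\<lambda>g. cmod (\<xi> g)) F \<le> D"
  shows "\<xi> \<in> ell2" "l2norm \<xi> \<le> D"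
proof -
  have D: "D \<ge> 0" using assms[of "{}"] by simp
  have "(\<Sum>g\<in>F. (cmod (\<xi> g))^2) \<le> D^2" if "finite F" for F
  proof -
    have "sqrt (\<Sum>g\<in>F. (cmod (\<xi> g))^2) \<le> D" using assms[OF that] by (simp add: L2_set_def)
    then show ?thesis
      by (metis D real_sqrt_le_iff real_sqrt_pow2 real_sqrt_power sum_nonneg zero_le_power2)
  qed
  then show "\<xi> \<in> ell2" "l2norm \<xi> \<le> D" using ell2_I'[of \<xi> D] D by auto
qed

lemma ell2_pointwise: "\<xi> \<in> ell2 \<Longrightarrow> cmod (\<xi> h) \<le> l2norm \<xi>"
  using ell2_L2_le[of \<xi> "{h}"] by simp

lemma ell2_mono:
  assumes "\<eta> \<in> ell2" "\<And>h. cmod (\<xi> h) \<le> C * cmod (\<eta> h)" "C \<ge> 0"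
  shows "\<xi> \<in> ell2" "l2norm \<xi> \<le> C * l2norm \<eta>"
proof -
  have "L2_set (\<lambda>g. cmod (\<xi> g)) F \<le> C * l2norm \<eta>" if "finite F" for F
  proof -
    have "L2_set (\<lambda>g. cmod (\<xi> g)) F \<le> L2_set (\<lambda>g. C * cmod (\<eta> g)) F"
      by (rule L2_set_mono) (auto intro: assms)
    also have "\<dots> = C * L2_set (\<lambda>g. cmod (\<eta> g)) F"
      using assms(3) by (simp add: L2_set_right_distrib)
    also have "\<dots> \<le> C * l2norm \<eta>"
      using ell2_L2_le[OF assms(1) that] assms(3) by (simp add: mult_left_mono)
    finally show ?thesis .
  qed
  then show "\<xi> \<in> ell2" "l2norm \<xi> \<le> C * l2norm \<eta>" using ell2_I_L2[of \<xi> "C * l2norm \<eta>"] by auto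
qed

lemma ell2_add:
  assumes "\<xi> \<in> ell2" "\<eta> \<in> ell2"
  shows "(\<lambda>h. \<xi> h + \<eta> h) \<in> ell2" "l2norm (\<lambda>h. \<xi> h + \<eta> h) \<le> l2norm \<xi> + l2norm \<eta>"
proof -
  have "L2_set (\<lambda>g. cmod (\<xi> g + \<eta> g)) F \<le> l2norm \<xi> + l2norm \<eta>" if "finite F" for F
  proof -
    have "L2_set (\<lambda>g. cmod (\<xi> g + \<eta> g)) F \<le> L2_set (\<lambda>g. cmod (\<xi> g) + cmod (\<eta> g)) F"
      by (rule L2_set_mono) (auto intro: norm_triangle_ineq)
    also have "\<dots> \<le> L2_set (\<lambda>g. cmod (\<xi> g)) F + L2_set (\<lambda>g. cmod (\<eta> g)) F"
      by (rule L2_set_triangle_ineq)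
    also have "\<dots> \<le> l2norm \<xi> + l2norm \<eta>"
      using ell2_L2_le[OF assms(1) that] ell2_L2_le[OF assms(2) that] by simp
    finally show ?thesis .
  qed
  then show "(\<lambda>h. \<xi> h + \<eta> h) \<in> ell2" "l2norm (\<lambda>h. \<xi> h + \<eta> h) \<le> l2norm \<xi> + l2norm \<eta>"
    using ell2_I_L2[of "\<lambda>h. \<xi> h + \<eta> h" "l2norm \<xi> + l2norm \<eta>"] by auto
qed

lemma ell2_scale:
  assumes "\<xi> \<in> ell2"
  shows "(\<lambda>h. c * \<xi> h) \<in> ell2" "l2norm (\<lambda>h. c * \<xi> h) = cmod c * l2norm \<xi>"
proof -
  show "(\<lambda>h. c * \<xi> h) \<in> ell2" using ell2_mono[OF assms, of _ "cmod c"] by (simp add: norm_mult)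
  have "l2norm (\<lambda>h. c * \<xi> h) = sqrt (infsum (\<lambda>g. (cmod c)^2 * (cmod (\<xi> g))^2) UNIV)"
    unfolding l2norm_def by (simp add: norm_mult power_mult_distrib)
  also have "\<dots> = cmod c * l2norm \<xi>"
    unfolding l2norm_def by (simp add: infsum_cmult_right' real_sqrt_mult)
  finally show "l2norm (\<lambda>h. c * \<xi> h) = cmod c * l2norm \<xi>" .
qed

lemma ell2_zero: "(\<lambda>_. 0) \<in> ell2" "l2norm (\<lambda>_. 0) = 0"
  by (auto simp: ell2_def l2norm_def)

lemma l2norm_eq_0: "\<xi> \<in> ell2 \<Longrightarrow> l2norm \<xi> = 0 \<Longrightarrow> \<xi> = (\<lambda>_. 0)"
  using ell2_pointwise[of \<xi>] by fastforce

lemma ell2_diff: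
  assumes "\<xi> \<in> ell2" "\<eta> \<in> ell2"
  shows "(\<lambda>h. \<xi> h - \<eta> h) \<in> ell2"
  using ell2_add[OF assms(1) ell2_scale(1)[OF assms(2), of "-1"]] by simp

lemma ell2_sum:
  assumes "finite I" "\<And>i. i \<in> I \<Longrightarrow> v i \<in> ell2"
  shows "(\<lambda>h. \<Sum>i\<in>I. v i h) \<in> ell2 \<and> l2norm (\<lambda>h. \<Sum>i\<in>I. v i h) \<le> (\<Sum>i\<in>I. l2norm (v i))"
  using assms
proof (induction I rule: finite_induct)
  case empty then show ?case by (simp add: ell2_zero)
next
  case (insert a I)
  then have a: "v a \<in> ell2" and IH: "(\<lambda>h. \<Sum>i\<in>I. v i h) \<in> ell2 \<and> l2norm (\<lambda>h. \<Sum>i\<in>I. v i h) \<le> (\<Sum>i\<in>I. l2norm (v i))"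
    by auto
  show ?case using ell2_add[OF a IH[THEN conjunct1]] IH insert.hyps by auto
qed

lemma ell2_reindex:
  assumes "\<xi> \<in> ell2" "bij p" "\<And>h. cmod (c h) = 1"
  shows "(\<lambda>h. c h * \<xi> (p h)) \<in> ell2" "l2norm (\<lambda>h. c h * \<xi> (p h)) = l2norm \<xi>"
proof -
  have bb: "bij_betw p UNIV UNIV" using assms(2) by (simp add: bij_def bij_betw_def)
  have eq: "(\<lambda>g. (cmod (c g * \<xi> (p g)))^2) = (\<lambda>x. (\<lambda>g. (cmod (\<xi> g))^2) (p x))"
    by (auto simp: norm_mult assms(3))
  have "(\<lambda>g. (cmod (c g * \<xi> (p g)))^2) summable_on UNIV"
    unfolding eq using assms(1) summable_on_reindex_bij_betw[OF bb, of "\<lambda>g. (cmod (\<xi> g))^2"]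
    by (auto simp: ell2_def)
  then show "(\<lambda>h. c h * \<xi> (p h)) \<in> ell2" by (simp add: ell2_def)
  show "l2norm (\<lambda>h. c h * \<xi> (p h)) = l2norm \<xi>"
    unfolding l2norm_def eq using infsum_reindex_bij_betw[OF bb] by simp
qed

lemma ell2_finsupp:
  assumes "finite K" "\<And>h. h \<notin> K \<Longrightarrow> \<xi> h = 0"
  shows "\<xi> \<in> ell2" "l2norm \<xi> = L2_set (\<lambda>g. cmod (\<xi> g)) K"
proof -
  have "L2_set (\<lambda>g. cmod (\<xi> g)) F \<le> L2_set (\<lambda>g. cmod (\<xi> g)) K" if "finite F" for F
  proof -
    have "L2_set (\<lambda>g. cmod (\<xi> g)) F = L2_set (\<lambda>g. cmod (\<xi> g)) (F \<inter> K)"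
      unfolding L2_set_def using that assms
      by (intro arg_cong[where f=sqrt] sum.mono_neutral_right) auto
    also have "\<dots> \<le> L2_set (\<lambda>g. cmod (\<xi> g)) K"
      unfolding L2_set_def using assms by (intro real_sqrt_le_mono sum_mono2) auto
    finally show ?thesis .
  qed
  then have A: "\<xi> \<in> ell2" "l2norm \<xi> \<le> L2_set (\<lambda>g. cmod (\<xi> g)) K"
    using ell2_I_L2[of \<xi> "L2_set (\<lambda>g. cmod (\<xi> g)) K"] by auto
  then show "\<xi> \<in> ell2" "l2norm \<xi> = L2_set (\<lambda>g. cmod (\<xi> g)) K"
    using ell2_L2_le[OF A(1) assms(1)] by auto
qed

definition dlt :: "'g \<Rightarrow> 'g \<Rightarrow> complex" where
  "dlt k = (\<lambda>h. if h = k then 1 else 0)"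

lemma dlt_ell2: "dlt k \<in> ell2" "l2norm (dlt k) = 1"
  using ell2_finsupp[of "{k}" "dlt k"] by (auto simp: dlt_def)

lemma opnorm_bound:
  fixes T :: "'g op"
  assumes "bounded_op T" "\<xi> \<in> ell2"
  shows "l2norm (T \<xi>) \<le> opnorm T * l2norm \<xi>"
proof (cases "\<xi> = (\<lambda>_. 0)")
  case True
  obtain M where M: "\<forall>\<xi>\<in>ell2. l2norm (T \<xi>) \<le> M * l2norm \<xi>" using assms(1) by (auto simp: bounded_op_def)
  have z: "l2norm \<xi> = 0" by (simp add: True l2norm_def)
  have "l2norm (T \<xi>) \<le> M * l2norm \<xi>" using assms(2) M by auto
  then show ?thesis using z l2norm_nonneg[of "T \<xi>"] by simp
next
  case False
  obtain M where M: "\<forall>\<xi>\<in>ell2. l2norm (T \<xi>) \<le> M * l2norm \<xi>" using assms(1) by (auto simp: bounded_op_def)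
  have pos: "l2norm \<xi> > 0" using False l2norm_eq_0[OF assms(2)] l2norm_nonneg[of \<xi>] by force
  have bdd: "bdd_above {l2norm (T \<xi>) / l2norm \<xi> | \<xi>. \<xi> \<in> ell2 \<and> \<xi> \<noteq> (\<lambda>_. 0)}"
  proof (rule bdd_aboveI[where M=M], clarify)
    fix \<eta> :: "'g \<Rightarrow> complex" assume "\<eta> \<in> ell2" "\<eta> \<noteq> (\<lambda>_. 0)"
    then have "l2norm \<eta> > 0" using l2norm_eq_0 l2norm_nonneg[of \<eta>] by force
    then show "l2norm (T \<eta>) / l2norm \<eta> \<le> M" using M \<open>\<eta> \<in> ell2\<close> by (simp add: divide_le_eq)
  qed
  have "l2norm (T \<xi>) / l2norm \<xi> \<le> opnorm T"
  proof -
    have "l2norm (T \<xi>) / l2norm \<xi> \<in> {l2norm (T \<xi>) / l2norm \<xi> | \<xi>. \<xi> \<in> ell2 \<and> \<xi> \<noteq> (\<lambda>_. 0)}"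
      using assms(2) False by blast
    then show ?thesis unfolding opnorm_def by (rule cSup_upper[OF _ bdd])
  qed
  then show ?thesis using pos by (simp add: divide_le_eq)
qed

lemma opnorm_le:
  fixes T :: "'g op"
  assumes "\<And>\<xi>. \<xi> \<in> ell2 \<Longrightarrow> l2norm (T \<xi>) \<le> C * l2norm \<xi>"
  shows "opnorm T \<le> C"
  unfolding opnorm_def
proof (rule cSup_least)
  fix k :: 'g
  have "dlt k \<noteq> (\<lambda>_. 0)"
  proof
    assume "dlt k = (\<lambda>_. 0)"
    then have "dlt k k = 0" by simp
    then show False by (simp add: dlt_def)
  qed
  then have "l2norm (T (dlt k)) / l2norm (dlt k) \<in> {l2norm (T \<xi>) / l2norm \<xi> | \<xi>. \<xi> \<in> ell2 \<and> \<xi> \<noteq> (\<lambda>_. 0)}"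
    using dlt_ell2(1)[of k] by blast
  then show "{l2norm (T \<xi>) / l2norm \<xi> | \<xi>. \<xi> \<in> ell2 \<and> \<xi> \<noteq> (\<lambda>_. 0)} \<noteq> {}"
    by blast
next
  fix r assume "r \<in> {l2norm (T \<xi>) / l2norm \<xi> | \<xi>. \<xi> \<in> ell2 \<and> \<xi> \<noteq> (\<lambda>_. 0)}"
  then obtain \<xi> where r: "r = l2norm (T \<xi>) / l2norm \<xi>" "\<xi> \<in> ell2" "\<xi> \<noteq> (\<lambda>_. 0)" by auto
  then have "l2norm \<xi> > 0" using l2norm_eq_0 l2norm_nonneg[of \<xi>] by force
  then show "r \<le> C" using r assms[OF r(2)] by (simp add: divide_le_eq)
qed

lemma opnorm_nonneg:
  fixes T :: "'g op"
  assumes "bounded_op T"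
  shows "opnorm T \<ge> 0"
proof -
  fix k :: 'g
  have "0 \<le> l2norm (T (dlt k))" by (rule l2norm_nonneg)
  also have "\<dots> \<le> opnorm T * l2norm (dlt k)" by (rule opnorm_bound[OF assms dlt_ell2(1)])
  finally show ?thesis by (simp add: dlt_ell2)
qed

lemma bounded_opI:
  fixes T :: "'g op"
  assumes "\<And>\<xi>. \<xi> \<in> ell2 \<Longrightarrow> T \<xi> \<in> ell2" "\<And>\<xi>. \<xi> \<in> ell2 \<Longrightarrow> l2norm (T \<xi>) \<le> M * l2norm \<xi>"
  shows "bounded_op T"
  using assms unfolding bounded_op_def by blast

lemma bounded_opD:
  fixes T :: "'g op"
  assumes "bounded_op T" "\<xi> \<in> ell2"
  shows "T \<xi> \<in> ell2"
  using assms unfolding bounded_op_def by blast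

lemma bounded_op_zero:
  fixes T :: "'g op"
  assumes "bounded_op T"
  shows "T (\<lambda>_. 0) = (\<lambda>_. 0)"
proof -
  have "l2norm (T (\<lambda>_. 0)) \<le> opnorm T * l2norm (\<lambda>_::'g. 0::complex)"
    by (rule opnorm_bound[OF assms ell2_zero(1)])
  then have "l2norm (T (\<lambda>_. 0)) = 0" using l2norm_nonneg[of "T (\<lambda>_. 0)"] by (simp add: l2norm_def)
  then show ?thesis using l2norm_eq_0 bounded_opD[OF assms ell2_zero(1)] by blast
qed

lemma bounded_op_diff:
  fixes T :: "'g op"
  assumes "bounded_op T" "bounded_op S"
  shows "bounded_op (\<lambda>\<xi> h. T \<xi> h - S \<xi> h)"
proof (rule bounded_opI)
  fix \<xi> :: "'g \<Rightarrow> complex" assume x: "\<xi> \<in> ell2"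
  have a: "T \<xi> \<in> ell2" "S \<xi> \<in> ell2" using x assms bounded_opD by auto
  show "(\<lambda>h. T \<xi> h - S \<xi> h) \<in> ell2" using ell2_diff[OF a] .
  have "l2norm (\<lambda>h. T \<xi> h + (-1) * S \<xi> h) \<le> l2norm (T \<xi>) + l2norm (\<lambda>h. (-1) * S \<xi> h)"
    using ell2_add[OF a(1) ell2_scale(1)[OF a(2)]] by blast
  also have "\<dots> \<le> opnorm T * l2norm \<xi> + opnorm S * l2norm \<xi>"
    using ell2_scale(2)[OF a(2), of "-1"] opnorm_bound[OF assms(1) x] opnorm_bound[OF assms(2) x] by simp
  finally show "l2norm (\<lambda>h. T \<xi> h - S \<xi> h) \<le> (opnorm T + opnorm S) * l2norm \<xi>"
    by (simp add: algebra_simps)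
qed

definition unimod :: "('g \<Rightarrow> 'g \<Rightarrow> complex) \<Rightarrow> bool" where
  "unimod \<sigma> \<longleftrightarrow> (\<forall>g h. cmod (\<sigma> g h) = 1)"

lemma unimod_cnj: "cmod z = 1 \<Longrightarrow> z * cnj z = 1"
  using complex_norm_square[of z] by simp

lemma bij_left_add: "bij (\<lambda>h::'g::group_add. a + h)"
proof (rule bijI)
  show "inj (\<lambda>h::'g. a + h)" by (simp add: inj_def)
  show "surj (\<lambda>h::'g. a + h)"
  proof (rule surjI[where f="\<lambda>h. -a + h"])
    fix x :: 'g show "a + (- a + x) = x" by (rule add_minus_cancel)
  qed
qed
lemma bij_right_add: "bij (\<lambda>h::'g::group_add. h + a)"
proof (rule bijI)
  show "inj (\<lambda>h::'g. h + a)" by (simp add: inj_def)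
  show "surj (\<lambda>h::'g. h + a)"
  proof (rule surjI[where f="\<lambda>h. h + - a"])
    fix x :: 'g show "x + - a + a = x" by (simp add: add.assoc)
  qed
qed

lemma Lam_iso:
  assumes "unimod \<sigma>" "\<xi> \<in> ell2"
  shows "Lam \<sigma> g \<xi> \<in> ell2" "l2norm (Lam \<sigma> g \<xi>) = l2norm \<xi>"
proof -
  have e: "Lam \<sigma> g \<xi> = (\<lambda>h. \<sigma> g (-g + h) * \<xi> (-g + h))" by (simp add: Lam_def)
  have u: "\<And>h. cmod (\<sigma> g (-g + h)) = 1" using assms(1) by (simp add: unimod_def)
  show "Lam \<sigma> g \<xi> \<in> ell2" "l2norm (Lam \<sigma> g \<xi>) = l2norm \<xi>"
    unfolding e using ell2_reindex[OF assms(2) bij_left_add[of "-g"] u] by auto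
qed

definition Comb :: "('g::group_add \<Rightarrow> 'g \<Rightarrow> complex) \<Rightarrow> ('g \<Rightarrow> complex) \<Rightarrow> 'g set \<Rightarrow> 'g op" where
  "Comb \<sigma> c E = (\<lambda>\<xi> h. \<Sum>g\<in>E. c g * Lam \<sigma> g \<xi> h)"

lemma Comb_bound:
  assumes "unimod \<sigma>" "finite E" "\<xi> \<in> ell2"
  shows "Comb \<sigma> c E \<xi> \<in> ell2" "l2norm (Comb \<sigma> c E \<xi>) \<le> (\<Sum>g\<in>E. cmod (c g)) * l2norm \<xi>"
proof -
  have v: "(\<lambda>h. c g * Lam \<sigma> g \<xi> h) \<in> ell2" "l2norm (\<lambda>h. c g * Lam \<sigma> g \<xi> h) = cmod (c g) * l2norm \<xi>" for g
    using ell2_scale[OF Lam_iso(1)[OF assms(1,3)]] Lam_iso(2)[OF assms(1,3)] by auto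
  have "Comb \<sigma> c E \<xi> \<in> ell2 \<and> l2norm (Comb \<sigma> c E \<xi>) \<le> (\<Sum>g\<in>E. l2norm (\<lambda>h. c g * Lam \<sigma> g \<xi> h))"
    unfolding Comb_def by (rule ell2_sum[OF assms(2)]) (use v in auto)
  moreover have "(\<Sum>g\<in>E. l2norm (\<lambda>h. c g * Lam \<sigma> g \<xi> h)) = (\<Sum>g\<in>E. cmod (c g)) * l2norm \<xi>"
    unfolding v(2) by (rule sum_distrib_right[symmetric])
  ultimately show "Comb \<sigma> c E \<xi> \<in> ell2" "l2norm (Comb \<sigma> c E \<xi>) \<le> (\<Sum>g\<in>E. cmod (c g)) * l2norm \<xi>"
    by auto
qed

lemma Comb_bounded: "unimod \<sigma> \<Longrightarrow> finite E \<Longrightarrow> bounded_op (Comb \<sigma> c E)"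
  by (rule bounded_opI[where M="\<Sum>g\<in>E. cmod (c g)"]) (simp_all add: Comb_bound)

definition rho :: "('g::group_add \<Rightarrow> 'g \<Rightarrow> complex) \<Rightarrow> 'g \<Rightarrow> 'g op" where
  "rho \<sigma> k \<xi> = (\<lambda>h. cnj (\<sigma> h k) * \<xi> (h + k))"

definition linop :: "'g op \<Rightarrow> bool" where
  "linop T \<longleftrightarrow> (\<forall>\<xi>\<in>ell2. \<forall>\<eta>\<in>ell2. \<forall>a. T (\<lambda>h. a * \<xi> h + \<eta> h) = (\<lambda>h. a * T \<xi> h + T \<eta> h))"

definition commr :: "('g::group_add \<Rightarrow> 'g \<Rightarrow> complex) \<Rightarrow> 'g op \<Rightarrow> bool" where
  "commr \<sigma> T \<longleftrightarrow> (\<forall>k. \<forall>\<xi>\<in>ell2. T (rho \<sigma> k \<xi>) = rho \<sigma> k (T \<xi>))"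

definition good :: "('g::group_add \<Rightarrow> 'g \<Rightarrow> complex) \<Rightarrow> 'g op \<Rightarrow> bool" where
  "good \<sigma> T \<longleftrightarrow> bounded_op T \<and> linop T \<and> commr \<sigma> T"

lemma rho_iso:
  assumes "unimod \<sigma>" "\<xi> \<in> ell2"
  shows "rho \<sigma> k \<xi> \<in> ell2" "l2norm (rho \<sigma> k \<xi>) = l2norm \<xi>"
proof -
  have u: "\<And>h. cmod (cnj (\<sigma> h k)) = 1" using assms(1) by (simp add: unimod_def)
  show "rho \<sigma> k \<xi> \<in> ell2" "l2norm (rho \<sigma> k \<xi>) = l2norm \<xi>"
    unfolding rho_def using ell2_reindex[OF assms(2) bij_right_add[of k] u] by auto
qed

lemma lin_scale:
  fixes T :: "'g op"
  assumes "linop T" "bounded_op T" "\<xi> \<in> ell2"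
  shows "T (\<lambda>h. a * \<xi> h) = (\<lambda>h. a * T \<xi> h)"
proof -
  have L: "\<And>\<xi> \<eta> a. \<xi> \<in> ell2 \<Longrightarrow> \<eta> \<in> ell2 \<Longrightarrow> T (\<lambda>h. a * \<xi> h + \<eta> h) = (\<lambda>h. a * T \<xi> h + T \<eta> h)"
    using assms(1) unfolding linop_def by blast
  have "T (\<lambda>h. a * \<xi> h + (\<lambda>_::'g. 0::complex) h) = (\<lambda>h. a * T \<xi> h + T (\<lambda>_. 0) h)"
    by (rule L[OF assms(3) ell2_zero(1)])
  then show ?thesis using bounded_op_zero[OF assms(2)] by simp
qed

lemma lin_add:
  fixes T :: "'g op"
  assumes "linop T" "\<xi> \<in> ell2" "\<eta> \<in> ell2"
  shows "T (\<lambda>h. \<xi> h + \<eta> h) = (\<lambda>h. T \<xi> h + T \<eta> h)"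
proof -
  have L: "\<And>\<xi> \<eta> a. \<xi> \<in> ell2 \<Longrightarrow> \<eta> \<in> ell2 \<Longrightarrow> T (\<lambda>h. a * \<xi> h + \<eta> h) = (\<lambda>h. a * T \<xi> h + T \<eta> h)"
    using assms(1) unfolding linop_def by blast
  show ?thesis using L[OF assms(2,3), of 1] by simp
qed

lemma lin_sum:
  fixes T :: "'g op"
  assumes "linop T" "bounded_op T" "finite I" "\<And>i. i \<in> I \<Longrightarrow> v i \<in> ell2"
  shows "T (\<lambda>h. \<Sum>i\<in>I. c i * v i h) = (\<lambda>h. \<Sum>i\<in>I. c i * T (v i) h)"
  using assms(3,4)
proof (induction I rule: finite_induct)
  case empty
  show ?case using bounded_op_zero[OF assms(2)] by simp
next
  case (insert a I)
  have m1: "(\<lambda>h. c a * v a h) \<in> ell2" using insert ell2_scale by auto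
  have m2: "(\<lambda>h. \<Sum>i\<in>I. c i * v i h) \<in> ell2"
    using ell2_sum[OF insert(1), of "\<lambda>i h. c i * v i h"] insert ell2_scale by auto
  have "T (\<lambda>h. \<Sum>i\<in>insert a I. c i * v i h) = T (\<lambda>h. c a * v a h + (\<Sum>i\<in>I. c i * v i h))"
    using insert by simp
  also have "\<dots> = (\<lambda>h. T (\<lambda>h. c a * v a h) h + T (\<lambda>h. \<Sum>i\<in>I. c i * v i h) h)"
    by (rule lin_add[OF assms(1) m1 m2])
  also have "\<dots> = (\<lambda>h. \<Sum>i\<in>insert a I. c i * T (v i) h)"
    using insert lin_scale[OF assms(1,2)] by simp
  finally show ?case .
qed

lemma cnj_trick:
  fixes x y z w :: complex
  assumes "x * y = z * w" "y * cnj y = 1" "z * cnj z = 1"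
  shows "x * cnj z = cnj y * w"
proof -
  have "x * cnj z = x * cnj z * (y * cnj y)" by (simp add: assms(2))
  also have "\<dots> = (x*y) * cnj z * cnj y" by (simp add: mult_ac)
  also have "\<dots> = (z*w) * cnj z * cnj y" using assms(1) by simp
  also have "\<dots> = w * cnj y * (z * cnj z)" by (simp add: mult_ac)
  also have "\<dots> = cnj y * w" by (simp add: assms(3) mult.commute)
  finally show ?thesis .
qed

lemma ell2_prod_summable:
  assumes "\<xi> \<in> ell2" "\<eta> \<in> ell2"
  shows "(\<lambda>g. \<xi> g * cnj (\<eta> g)) summable_on UNIV"
proof -
  have s: "(\<lambda>g. (cmod (\<xi> g))^2 + (cmod (\<eta> g))^2) summable_on UNIV"
    using assms by (intro summable_on_add) (auto simp: ell2_def)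
  have "norm (\<xi> g * cnj (\<eta> g)) \<le> (cmod (\<xi> g))^2 + (cmod (\<eta> g))^2" for g
  proof -
    have "0 \<le> (cmod (\<xi> g) - cmod (\<eta> g))^2" by simp
    then have "2 * (cmod (\<xi> g) * cmod (\<eta> g)) \<le> (cmod (\<xi> g))^2 + (cmod (\<eta> g))^2"
      by (simp add: power2_diff)
    moreover have "0 \<le> cmod (\<xi> g) * cmod (\<eta> g)" by simp
    moreover have "norm (\<xi> g * cnj (\<eta> g)) = cmod (\<xi> g) * cmod (\<eta> g)" by (simp add: norm_mult)
    ultimately show ?thesis by linarith
  qed
  then have "(\<lambda>g. norm (\<xi> g * cnj (\<eta> g))) summable_on UNIV"
    by (intro Infinite_Sum.abs_summable_on_comparison_test'[OF s]) auto
  then show ?thesis by (rule abs_summable_summable)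
qed

lemma l2inner_lin2:
  assumes "\<zeta> \<in> ell2" "\<xi> \<in> ell2" "\<eta> \<in> ell2"
  shows "l2inner \<zeta> (\<lambda>h. a * \<xi> h + \<eta> h) = cnj a * l2inner \<zeta> \<xi> + l2inner \<zeta> \<eta>"
proof -
  have "l2inner \<zeta> (\<lambda>h. a * \<xi> h + \<eta> h) = infsum (\<lambda>g. cnj a * (\<zeta> g * cnj (\<xi> g)) + \<zeta> g * cnj (\<eta> g)) UNIV"
    unfolding l2inner_def by (simp add: algebra_simps)
  also have "\<dots> = infsum (\<lambda>g. cnj a * (\<zeta> g * cnj (\<xi> g))) UNIV + infsum (\<lambda>g. \<zeta> g * cnj (\<eta> g)) UNIV"
    by (intro infsum_add summable_on_cmult_right ell2_prod_summable assms)
  also have "\<dots> = cnj a * l2inner \<zeta> \<xi> + l2inner \<zeta> \<eta>"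
    unfolding l2inner_def by (simp add: infsum_cmult_right')
  finally show ?thesis .
qed

lemma l2inner_dlt: "l2inner (dlt h) \<zeta> = cnj (\<zeta> h)"
proof -
  have "l2inner (dlt h) \<zeta> = infsum (\<lambda>g. dlt h g * cnj (\<zeta> g)) {h}"
    unfolding l2inner_def by (rule infsum_cong_neutral) (auto simp: dlt_def)
  then show ?thesis by (simp add: dlt_def)
qed


lemma normalized_unimod: "normalized_2cocycle \<sigma> \<Longrightarrow> unimod \<sigma>"
  by (simp add: normalized_2cocycle_def unimod_def)

lemma good_gen:
  assumes "normalized_2cocycle \<sigma>"
  shows "good \<sigma> (Lam \<sigma> g)"
proof -
  have u: "unimod \<sigma>" using assms by (rule normalized_unimod)
  have b: "bounded_op (Lam \<sigma> g)"
    by (rule bounded_opI[where M=1]) (simp_all add: Lam_iso[OF u])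
  have l: "linop (Lam \<sigma> g)"
    unfolding linop_def Lam_def by (simp add: algebra_simps)
  have c: "commr \<sigma> (Lam \<sigma> g)"
    unfolding commr_def
  proof (intro allI ballI ext)
    fix k h and \<xi> :: "'a \<Rightarrow> complex"
    define a where "a = -g + h"
    have ga: "g + a = h" by (simp add: a_def add.assoc[symmetric])
    have ak: "-g + (h + k) = a + k" by (simp add: a_def add.assoc)
    have coc: "\<sigma> g a * \<sigma> (g + a) k = \<sigma> a k * \<sigma> g (a + k)"
      using assms by (simp add: normalized_2cocycle_def)
    have uu: "\<And>x y. \<sigma> x y * cnj (\<sigma> x y) = 1" using u unfolding unimod_def by (simp add: unimod_cnj)
    have key: "\<sigma> g a * cnj (\<sigma> a k) = cnj (\<sigma> h k) * \<sigma> g (a + k)"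
      using cnj_trick[OF coc uu uu] ga by simp
    show "Lam \<sigma> g (rho \<sigma> k \<xi>) h = rho \<sigma> k (Lam \<sigma> g \<xi>) h"
      unfolding Lam_def rho_def a_def[symmetric] ak
      using key by (simp add: mult.assoc[symmetric])
  qed
  show ?thesis using b l c by (simp add: good_def)
qed

lemma good_add:
  assumes "normalized_2cocycle \<sigma>" "good \<sigma> T" "good \<sigma> S"
  shows "good \<sigma> (\<lambda>\<xi> h. T \<xi> h + S \<xi> h)"
proof -
  have T: "bounded_op T" "linop T" "commr \<sigma> T" and S: "bounded_op S" "linop S" "commr \<sigma> S"
    using assms by (auto simp: good_def)
  have b: "bounded_op (\<lambda>\<xi> h. T \<xi> h + S \<xi> h)"
  proof (rule bounded_opI[where M="opnorm T + opnorm S"])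
    fix \<xi> :: "'a \<Rightarrow> complex" assume x: "\<xi> \<in> ell2"
    have a: "T \<xi> \<in> ell2" "S \<xi> \<in> ell2" using x T S bounded_opD by auto
    show "(\<lambda>h. T \<xi> h + S \<xi> h) \<in> ell2" using ell2_add(1)[OF a] .
    show "l2norm (\<lambda>h. T \<xi> h + S \<xi> h) \<le> (opnorm T + opnorm S) * l2norm \<xi>"
      using ell2_add(2)[OF a] opnorm_bound[OF T(1) x] opnorm_bound[OF S(1) x]
      by (simp add: algebra_simps)
  qed
  have l: "linop (\<lambda>\<xi> h. T \<xi> h + S \<xi> h)"
    using T(2) S(2) unfolding linop_def by (simp add: algebra_simps)
  have c: "commr \<sigma> (\<lambda>\<xi> h. T \<xi> h + S \<xi> h)"
    using T(3) S(3) unfolding commr_def by (simp add: rho_def algebra_simps)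
  show ?thesis using b l c by (simp add: good_def)
qed

lemma good_scale:
  assumes "normalized_2cocycle \<sigma>" "good \<sigma> T"
  shows "good \<sigma> (\<lambda>\<xi> h. c * T \<xi> h)"
proof -
  have T: "bounded_op T" "linop T" "commr \<sigma> T"
    using assms by (auto simp: good_def)
  have b: "bounded_op (\<lambda>\<xi> h. c * T \<xi> h)"
  proof (rule bounded_opI[where M="cmod c * opnorm T"])
    fix \<xi> :: "'a \<Rightarrow> complex" assume x: "\<xi> \<in> ell2"
    have a: "T \<xi> \<in> ell2" using x T bounded_opD by auto
    show "(\<lambda>h. c * T \<xi> h) \<in> ell2" using ell2_scale(1)[OF a] .
    show "l2norm (\<lambda>h. c * T \<xi> h) \<le> (cmod c * opnorm T) * l2norm \<xi>"
      using ell2_scale(2)[OF a] opnorm_bound[OF T(1) x]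
      by (simp add: mult.assoc mult_left_mono)
  qed
  have l: "linop (\<lambda>\<xi> h. c * T \<xi> h)"
    using T(2) unfolding linop_def by (simp add: algebra_simps)
  have cc: "commr \<sigma> (\<lambda>\<xi> h. c * T \<xi> h)"
    using T(3) unfolding commr_def by (simp add: rho_def algebra_simps)
  show ?thesis using b l cc by (simp add: good_def)
qed

lemma good_comp:
  assumes "normalized_2cocycle \<sigma>" "good \<sigma> T" "good \<sigma> S"
  shows "good \<sigma> (\<lambda>\<xi>. T (S \<xi>))"
proof -
  have T: "bounded_op T" "linop T" "commr \<sigma> T" and S: "bounded_op S" "linop S" "commr \<sigma> S"
    using assms by (auto simp: good_def)
  have b: "bounded_op (\<lambda>\<xi>. T (S \<xi>))"
  proof (rule bounded_opI[where M="opnorm T * opnorm S"])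
    fix \<xi> :: "'a \<Rightarrow> complex" assume x: "\<xi> \<in> ell2"
    have a: "S \<xi> \<in> ell2" using x S bounded_opD by auto
    show "T (S \<xi>) \<in> ell2" using a T bounded_opD by auto
    have "l2norm (T (S \<xi>)) \<le> opnorm T * l2norm (S \<xi>)" by (rule opnorm_bound[OF T(1) a])
    also have "\<dots> \<le> opnorm T * (opnorm S * l2norm \<xi>)"
      by (rule mult_left_mono[OF opnorm_bound[OF S(1) x] opnorm_nonneg[OF T(1)]])
    finally show "l2norm (T (S \<xi>)) \<le> (opnorm T * opnorm S) * l2norm \<xi>" by (simp add: mult.assoc)
  qed
  have l: "linop (\<lambda>\<xi>. T (S \<xi>))"
    unfolding linop_def
  proof (intro ballI allI)
    fix \<xi> \<eta> :: "'a \<Rightarrow> complex" and a assume x: "\<xi> \<in> ell2" "\<eta> \<in> ell2"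
    have "S (\<lambda>h. a * \<xi> h + \<eta> h) = (\<lambda>h. a * S \<xi> h + S \<eta> h)" using S(2) x by (simp add: linop_def)
    moreover have "S \<xi> \<in> ell2" "S \<eta> \<in> ell2" using x S(1) bounded_opD by auto
    ultimately show "T (S (\<lambda>h. a * \<xi> h + \<eta> h)) = (\<lambda>h. a * T (S \<xi>) h + T (S \<eta>) h)"
      using T(2) by (simp add: linop_def)
  qed
  have c: "commr \<sigma> (\<lambda>\<xi>. T (S \<xi>))"
    unfolding commr_def
  proof (intro ballI allI)
    fix \<xi> :: "'a \<Rightarrow> complex" and k assume x: "\<xi> \<in> ell2"
    have "S \<xi> \<in> ell2" using x S(1) bounded_opD by auto
    then show "T (S (rho \<sigma> k \<xi>)) = rho \<sigma> k (T (S \<xi>))"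
      using S(3) T(3) x by (simp add: commr_def)
  qed
  show ?thesis using b l c by (simp add: good_def)
qed


lemma good_adj:
  assumes "normalized_2cocycle \<sigma>" "good \<sigma> T" "bounded_op S"
    and adjP: "\<forall>\<xi>\<in>ell2. \<forall>\<eta>\<in>ell2. l2inner (T \<xi>) \<eta> = l2inner \<xi> (S \<eta>)"
  shows "good \<sigma> S"
proof -
  have u: "unimod \<sigma>" using assms(1) by (rule normalized_unimod)
  have T: "bounded_op T" "linop T" "commr \<sigma> T" using assms by (auto simp: good_def)
  have Td: "T (dlt h) \<in> ell2" for h using bounded_opD[OF T(1) dlt_ell2(1)] .
  have Sval: "cnj (S \<eta> h) = l2inner (T (dlt h)) \<eta>" if "\<eta> \<in> ell2" for \<eta> h
    using adjP dlt_ell2(1)[of h] that l2inner_dlt[of h "S \<eta>"] by simp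
  have l: "linop S"
    unfolding linop_def
  proof (intro ballI allI ext)
    fix \<xi> \<eta> :: "'a \<Rightarrow> complex" and a h assume x: "\<xi> \<in> ell2" "\<eta> \<in> ell2"
    have m: "(\<lambda>h. a * \<xi> h + \<eta> h) \<in> ell2" using ell2_add(1)[OF ell2_scale(1)[OF x(1)] x(2)] .
    have "cnj (S (\<lambda>h. a * \<xi> h + \<eta> h) h) = l2inner (T (dlt h)) (\<lambda>h. a * \<xi> h + \<eta> h)"
      by (rule Sval[OF m])
    also have "\<dots> = cnj a * l2inner (T (dlt h)) \<xi> + l2inner (T (dlt h)) \<eta>"
      by (rule l2inner_lin2[OF Td x])
    also have "\<dots> = cnj (a * S \<xi> h + S \<eta> h)"
      using Sval[OF x(1)] Sval[OF x(2)] by simp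
    finally show "S (\<lambda>h. a * \<xi> h + \<eta> h) h = a * S \<xi> h + S \<eta> h"
      by (metis complex_cnj_cnj)
  qed
  have uu: "\<And>x y. \<sigma> x y * cnj (\<sigma> x y) = 1" using u unfolding unimod_def by (simp add: unimod_cnj)
  have c: "commr \<sigma> S"
    unfolding commr_def
  proof (intro ballI allI ext)
    fix \<eta> :: "'a \<Rightarrow> complex" and k h assume x: "\<eta> \<in> ell2"
    have dd: "dlt h = (\<lambda>h'. \<sigma> h k * rho \<sigma> k (dlt (h + k)) h')"
      by (rule ext) (auto simp: rho_def dlt_def uu)
    have TD: "T (dlt h) = (\<lambda>h'. \<sigma> h k * rho \<sigma> k (T (dlt (h + k))) h')"
    proof -
      have "T (dlt h) = T (\<lambda>h'. \<sigma> h k * rho \<sigma> k (dlt (h + k)) h')" using dd by simp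
      also have "\<dots> = (\<lambda>h'. \<sigma> h k * T (rho \<sigma> k (dlt (h + k))) h')"
        by (rule lin_scale[OF T(2) T(1) rho_iso(1)[OF u dlt_ell2(1)]])
      also have "\<dots> = (\<lambda>h'. \<sigma> h k * rho \<sigma> k (T (dlt (h + k))) h')"
      proof -
        have "T (rho \<sigma> k (dlt (h+k))) = rho \<sigma> k (T (dlt (h+k)))"
          using T(3) dlt_ell2(1)[of "h+k"] unfolding commr_def by blast
        then show ?thesis by simp
      qed
      finally show ?thesis .
    qed
    have "cnj (S (rho \<sigma> k \<eta>) h) = l2inner (T (dlt h)) (rho \<sigma> k \<eta>)"
      by (rule Sval[OF rho_iso(1)[OF u x]])
    also have "\<dots> = infsum (\<lambda>h'. \<sigma> h k * ((\<lambda>j. T (dlt (h + k)) j * cnj (\<eta> j)) (h' + k))) UNIV"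
      unfolding l2inner_def TD rho_def
    proof (rule infsum_cong)
      fix h' :: 'a
      have "cnj (\<sigma> h' k) * \<sigma> h' k = 1" using uu[of h' k] by (simp add: mult.commute)
      then show "\<sigma> h k * (cnj (\<sigma> h' k) * T (dlt (h + k)) (h' + k)) * cnj (cnj (\<sigma> h' k) * \<eta> (h' + k)) =
        \<sigma> h k * (T (dlt (h + k)) (h' + k) * cnj (\<eta> (h' + k)))"
        by (simp add: algebra_simps)
    qed
    also have "\<dots> = \<sigma> h k * infsum (\<lambda>j. T (dlt (h + k)) j * cnj (\<eta> j)) UNIV"
      using infsum_reindex_bij_betw[of "\<lambda>h'. h' + k" UNIV UNIV "\<lambda>j. T (dlt (h + k)) j * cnj (\<eta> j)"]
        bij_right_add[of k]
      by (simp add: infsum_cmult_right' bij_def bij_betw_def)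
    also have "\<dots> = \<sigma> h k * cnj (S \<eta> (h + k))"
      using Sval[OF x, of "h + k"] by (simp add: l2inner_def)
    finally have "cnj (S (rho \<sigma> k \<eta>) h) = cnj (cnj (\<sigma> h k) * S \<eta> (h + k))" by simp
    then have "S (rho \<sigma> k \<eta>) h = cnj (\<sigma> h k) * S \<eta> (h + k)"
      by (metis complex_cnj_cnj)
    then show "S (rho \<sigma> k \<eta>) h = rho \<sigma> k (S \<eta>) h"
      by (simp add: rho_def)
  qed
  show ?thesis using assms(3) l c by (simp add: good_def)
qed


lemma good_lim:
  assumes "normalized_2cocycle \<sigma>" "\<And>n. good \<sigma> (Ts n)" "bounded_op T"
    and lim: "(\<lambda>n. opnorm (\<lambda>\<xi> h. Ts n \<xi> h - T \<xi> h)) \<longlonglongrightarrow> 0"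
  shows "good \<sigma> T"
proof -
  have u: "unimod \<sigma>" using assms(1) by (rule normalized_unimod)
  have Ts: "bounded_op (Ts n)" "linop (Ts n)" "commr \<sigma> (Ts n)" for n
    using assms(2)[of n] by (auto simp: good_def)
  have ptw: "(\<lambda>n. Ts n \<xi> h) \<longlonglongrightarrow> T \<xi> h" if x: "\<xi> \<in> ell2" for \<xi> h
  proof -
    have bd: "bounded_op (\<lambda>\<xi> h. Ts n \<xi> h - T \<xi> h)" for n
      by (rule bounded_op_diff[OF Ts(1) assms(3)])
    have bnd: "norm (Ts n \<xi> h - T \<xi> h) \<le> opnorm (\<lambda>\<xi> h. Ts n \<xi> h - T \<xi> h) * l2norm \<xi>" for n
    proof -
      have "norm (Ts n \<xi> h - T \<xi> h) \<le> l2norm (\<lambda>h. Ts n \<xi> h - T \<xi> h)"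
        using ell2_pointwise[OF bounded_opD[OF bd x]] by simp
      also have "\<dots> \<le> opnorm (\<lambda>\<xi> h. Ts n \<xi> h - T \<xi> h) * l2norm \<xi>"
        using opnorm_bound[OF bd x] by simp
      finally show ?thesis .
    qed
    have z: "(\<lambda>n. opnorm (\<lambda>\<xi> h. Ts n \<xi> h - T \<xi> h) * l2norm \<xi>) \<longlonglongrightarrow> 0"
      using tendsto_mult_left_zero[OF lim] by simp
    have "(\<lambda>n. Ts n \<xi> h - T \<xi> h) \<longlonglongrightarrow> 0"
      by (rule Lim_null_comparison[OF always_eventually z]) (rule allI, rule bnd)
    then show ?thesis by (simp add: LIM_zero_iff)
  qed
  have l: "linop T"
    unfolding linop_def
  proof (intro ballI allI ext)
    fix \<xi> \<eta> :: "'a \<Rightarrow> complex" and a h assume x: "\<xi> \<in> ell2" "\<eta> \<in> ell2"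
    have m: "(\<lambda>h. a * \<xi> h + \<eta> h) \<in> ell2" using ell2_add(1)[OF ell2_scale(1)[OF x(1)] x(2)] .
    have e: "Ts n (\<lambda>h. a * \<xi> h + \<eta> h) h = a * Ts n \<xi> h + Ts n \<eta> h" for n
    proof -
      have "Ts n (\<lambda>h. a * \<xi> h + \<eta> h) = (\<lambda>h. a * Ts n \<xi> h + Ts n \<eta> h)"
        using Ts(2)[of n] x unfolding linop_def by blast
      then show ?thesis by (rule fun_cong)
    qed
    have "(\<lambda>n. Ts n (\<lambda>h. a * \<xi> h + \<eta> h) h) \<longlonglongrightarrow> a * T \<xi> h + T \<eta> h"
      unfolding e by (intro tendsto_intros ptw x)
    then show "T (\<lambda>h. a * \<xi> h + \<eta> h) h = a * T \<xi> h + T \<eta> h"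
      by (rule LIMSEQ_unique[OF ptw[OF m, of h]])
  qed
  have c: "commr \<sigma> T"
    unfolding commr_def
  proof (intro ballI allI ext)
    fix \<xi> :: "'a \<Rightarrow> complex" and k h assume x: "\<xi> \<in> ell2"
    have e: "Ts n (rho \<sigma> k \<xi>) h = cnj (\<sigma> h k) * Ts n \<xi> (h + k)" for n
    proof -
      have "Ts n (rho \<sigma> k \<xi>) = rho \<sigma> k (Ts n \<xi>)"
        using Ts(3)[of n] x unfolding commr_def by blast
      then show ?thesis by (simp add: rho_def)
    qed
    have A: "(\<lambda>n. Ts n (rho \<sigma> k \<xi>) h) \<longlonglongrightarrow> cnj (\<sigma> h k) * T \<xi> (h + k)"
      unfolding e by (intro tendsto_intros ptw x)
    have B: "(\<lambda>n. Ts n (rho \<sigma> k \<xi>) h) \<longlonglongrightarrow> T (rho \<sigma> k \<xi>) h"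
      by (rule ptw[OF rho_iso(1)[OF u x]])
    have "T (rho \<sigma> k \<xi>) h = cnj (\<sigma> h k) * T \<xi> (h + k)"
      by (rule LIMSEQ_unique[OF B A])
    then show "T (rho \<sigma> k \<xi>) h = rho \<sigma> k (T \<xi>) h"
      by (simp add: rho_def)
  qed
  show ?thesis using assms(3) l c by (simp add: good_def)
qed

lemma twisted_good:
  assumes "normalized_2cocycle \<sigma>" "T \<in> twisted_Cr \<sigma>"
  shows "good \<sigma> T"
  using assms(2)
proof induction
  case (gen g) then show ?case by (rule good_gen[OF assms(1)])
next
  case (add T S) then show ?case by (intro good_add[OF assms(1)])
next
  case (scale T c) then show ?case by (intro good_scale[OF assms(1)])
next
  case (comp T S) show ?case by (rule good_comp[OF assms(1) comp.IH(1) comp.IH(2)])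
next
  case (adj T S) show ?case by (rule good_adj[OF assms(1) adj.IH adj.hyps(2) adj.hyps(3)])
next
  case (lim Ts T) show ?case by (rule good_lim[OF assms(1) lim.IH lim.hyps(2) lim.hyps(3)])
qed

lemma unimod_one: "unimod (\<lambda>_ _. 1)" by (simp add: unimod_def)

lemma pi_lambda_Comb: "pi_lambda f = Comb (\<lambda>_ _. 1) f {g. f g \<noteq> 0}"
  unfolding pi_lambda_def Comb_def lreg_def by simp

lemma haag_bdd:
  fixes E :: "'g::group_add set"
  assumes "finite E"
  shows "bdd_above {opnorm (pi_lambda f) | f. finite {g. f g \<noteq> 0} \<and> {g. f g \<noteq> 0} \<subseteq> E \<and> l2norm f = 1}"
proof (rule bdd_aboveI[where M="real (card E)"], clarify)
  fix f :: "'g \<Rightarrow> complex"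
  assume f: "finite {g. f g \<noteq> 0}" "{g. f g \<noteq> 0} \<subseteq> E" "l2norm f = 1"
  have fe: "f \<in> ell2" using ell2_finsupp(1)[OF f(1)] by auto
  have le1: "cmod (f g) \<le> 1" for g using ell2_pointwise[OF fe, of g] f(3) by simp
  have "opnorm (pi_lambda f) \<le> (\<Sum>g\<in>{g. f g \<noteq> 0}. cmod (f g))"
    unfolding pi_lambda_Comb
    by (rule opnorm_le) (rule Comb_bound(2)[OF unimod_one f(1)])
  also have "\<dots> \<le> (\<Sum>g\<in>{g. f g \<noteq> 0}. 1)" by (rule sum_mono) (rule le1)
  also have "\<dots> = real (card {g. f g \<noteq> 0})" by simp
  also have "\<dots> \<le> real (card E)" using card_mono[OF assms f(2)] by simp
  finally show "opnorm (pi_lambda f) \<le> real (card E)" .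
qed

lemma haag_upper:
  fixes E :: "'g::group_add set"
  assumes "finite E" "finite {g. f g \<noteq> 0}" "{g. f g \<noteq> 0} \<subseteq> E" "l2norm f = 1"
  shows "opnorm (pi_lambda f) \<le> haagerup_content E"
proof -
  have "E \<noteq> {}"
  proof
    assume "E = {}"
    then have "f = (\<lambda>_. 0)" using assms(3) by auto
    then show False using assms(4) by (simp add: l2norm_def)
  qed
  moreover have "opnorm (pi_lambda f) \<le> Sup {opnorm (pi_lambda f) | f. finite {g. f g \<noteq> 0} \<and> {g. f g \<noteq> 0} \<subseteq> E \<and> l2norm f = 1}"
    by (rule cSup_upper[OF _ haag_bdd[OF assms(1)]]) (use assms in blast)
  ultimately show ?thesis by (simp add: haagerup_content_def)
qed

lemma haag_nonneg:
  fixes E :: "'g::group_add set"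
  assumes "finite E"
  shows "haagerup_content E \<ge> 0"
proof (cases "E = {}")
  case True then show ?thesis by (simp add: haagerup_content_def)
next
  case False
  then obtain k where k: "k \<in> E" by auto
  have s: "{g. dlt k g \<noteq> 0} = {k}" by (auto simp: dlt_def)
  have "0 \<le> opnorm (pi_lambda (dlt k))"
    unfolding pi_lambda_Comb by (rule opnorm_nonneg[OF Comb_bounded[OF unimod_one]]) (simp add: s)
  also have "\<dots> \<le> haagerup_content E"
    by (rule haag_upper[OF assms]) (use s k dlt_ell2(2) in auto)
  finally show ?thesis .
qed


lemma twisted_haag:
  fixes E :: "'g::group_add set"
  assumes u: "unimod \<sigma>" and EB: "E \<subseteq> B" and B: "finite B" and x: "\<xi> \<in> ell2"
  shows "l2norm (Comb \<sigma> c E \<xi>) \<le> haagerup_content B * L2_set (\<lambda>g. cmod (c g)) E * l2norm \<xi>"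
proof -
  have E: "finite E" using EB B finite_subset by auto
  define N where "N = L2_set (\<lambda>g. cmod (c g)) E"
  have hB: "haagerup_content B \<ge> 0" by (rule haag_nonneg[OF B])
  show ?thesis
  proof (cases "N = 0")
    case True
    then have "\<forall>g\<in>E. c g = 0" using L2_set_eq_0_iff[OF E] unfolding N_def by simp
    then have "Comb \<sigma> c E \<xi> = (\<lambda>_. 0)" unfolding Comb_def by simp
    then show ?thesis using True hB l2norm_nonneg[of \<xi>] by (simp add: N_def[symmetric] l2norm_def)
  next
    case False
    then have Npos: "N > 0" using L2_set_nonneg[of "\<lambda>g. cmod (c g)" E] unfolding N_def by linarith
    define f where "f g = (if g \<in> E then complex_of_real (cmod (c g) / N) else 0)" for g
    have supp: "{g. f g \<noteq> 0} \<subseteq> E" by (auto simp: f_def)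
    have fsupp: "finite {g. f g \<noteq> 0}" using finite_subset[OF supp E] .
    have "l2norm f = L2_set (\<lambda>g. cmod (f g)) E"
      by (rule ell2_finsupp(2)[OF E]) (simp add: f_def)
    also have "\<dots> = L2_set (\<lambda>g. (1/N) * cmod (c g)) E"
      using Npos by (intro L2_set_cong) (auto simp: f_def norm_divide)
    also have "\<dots> = (1/N) * N"
      unfolding N_def by (rule L2_set_right_distrib[symmetric]) (use Npos in simp)
    also have "\<dots> = 1" using Npos by simp
    finally have fn: "l2norm f = 1" .
    have op: "opnorm (pi_lambda f) \<le> haagerup_content B"
      by (rule haag_upper[OF B fsupp _ fn]) (use supp EB in auto)
    define \<xi>' where "\<xi>' h = complex_of_real (cmod (\<xi> h))" for h
    have x': "\<xi>' \<in> ell2" "l2norm \<xi>' = l2norm \<xi>"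
      using ell2_mono[OF x, of \<xi>' 1] ell2_mono[OF _ _, of \<xi>' \<xi> 1] by (auto simp: \<xi>'_def l2norm_def)
    have pb: "bounded_op (pi_lambda f)" unfolding pi_lambda_Comb by (rule Comb_bounded[OF unimod_one fsupp])
    have pe: "pi_lambda f \<xi>' \<in> ell2" by (rule bounded_opD[OF pb x'(1)])
    have pw: "cmod (Comb \<sigma> c E \<xi> h) \<le> N * cmod (pi_lambda f \<xi>' h)" for h
    proof -
      have "cmod (Comb \<sigma> c E \<xi> h) \<le> (\<Sum>g\<in>E. cmod (c g * Lam \<sigma> g \<xi> h))"
        unfolding Comb_def by (rule norm_sum)
      also have "\<dots> = (\<Sum>g\<in>E. cmod (c g) * cmod (\<xi> (-g + h)))"
        using u by (simp add: Lam_def norm_mult unimod_def)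
      also have "\<dots> = N * (\<Sum>g\<in>E. (cmod (c g) / N) * cmod (\<xi> (-g + h)))"
        using Npos by (simp add: sum_distrib_left)
      also have "(\<Sum>g\<in>E. (cmod (c g) / N) * cmod (\<xi> (-g + h))) = cmod (pi_lambda f \<xi>' h)"
      proof -
        have "pi_lambda f \<xi>' h = (\<Sum>g\<in>{g. f g \<noteq> 0}. f g * \<xi>' (-g + h))"
          by (simp add: pi_lambda_def lreg_def Lam_def)
        also have "\<dots> = (\<Sum>g\<in>E. f g * \<xi>' (-g + h))"
          by (rule sum.mono_neutral_left[OF E supp]) auto
        also have "\<dots> = complex_of_real (\<Sum>g\<in>E. (cmod (c g) / N) * cmod (\<xi> (-g + h)))"
          by (simp add: f_def \<xi>'_def)
        finally have "pi_lambda f \<xi>' h = complex_of_real (\<Sum>g\<in>E. (cmod (c g) / N) * cmod (\<xi> (-g + h)))" .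
        moreover have "(\<Sum>g\<in>E. (cmod (c g) / N) * cmod (\<xi> (-g + h))) \<ge> 0"
          using Npos by (intro sum_nonneg) simp
        ultimately show ?thesis by (metis norm_of_real abs_of_nonneg)
      qed
      finally show ?thesis .
    qed
    have "l2norm (Comb \<sigma> c E \<xi>) \<le> N * l2norm (pi_lambda f \<xi>')"
      by (rule ell2_mono(2)[OF pe pw]) (use Npos in simp)
    also have "\<dots> \<le> N * (opnorm (pi_lambda f) * l2norm \<xi>')"
      by (rule mult_left_mono[OF opnorm_bound[OF pb x'(1)]]) (use Npos in simp)
    also have "\<dots> \<le> N * (haagerup_content B * l2norm \<xi>)"
      using op x'(2) Npos l2norm_nonneg[of \<xi>] by (simp add: mult_right_mono)
    finally show ?thesis by (simp add: N_def mult_ac)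
  qed
qed

lemma ell2_tail:
  assumes x: "\<xi> \<in> ell2" and K0: "finite K0" and d: "\<delta> > 0"
  shows "\<exists>K. finite K \<and> K0 \<subseteq> K \<and> l2norm (\<lambda>h. if h \<in> K then 0 else \<xi> h) \<le> \<delta>"
proof -
  define W where "W = infsum (\<lambda>g. (cmod (\<xi> g))^2) UNIV"
  have sm: "(\<lambda>g. (cmod (\<xi> g))^2) summable_on UNIV" using x by (simp add: ell2_def)
  obtain Fa where Fa: "finite Fa" "dist (\<Sum>g\<in>Fa. (cmod (\<xi> g))^2) W \<le> \<delta>^2"
    using infsum_finite_approximation[OF sm, of "\<delta>^2"] d unfolding W_def by auto
  define K where "K = K0 \<union> Fa"
  have K: "finite K" "K0 \<subseteq> K" using K0 Fa by (auto simp: K_def)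
  have s1: "(\<Sum>g\<in>Fa. (cmod (\<xi> g))^2) \<le> (\<Sum>g\<in>K. (cmod (\<xi> g))^2)"
    by (rule sum_mono2[OF K(1)]) (auto simp: K_def)
  have s2: "W - (\<Sum>g\<in>Fa. (cmod (\<xi> g))^2) \<le> \<delta>^2" using Fa(2) by (simp add: dist_real_def)
  have "(\<Sum>g\<in>G. (cmod (if g \<in> K then 0 else \<xi> g))^2) \<le> \<delta>^2" if G: "finite G" for G
  proof -
    have "(\<Sum>g\<in>G. (cmod (if g \<in> K then 0 else \<xi> g))^2) = (\<Sum>g\<in>G - K. (cmod (\<xi> g))^2)"
      by (rule sum.mono_neutral_cong_right) (use G in auto)
    also have "\<dots> = (\<Sum>g\<in>(G - K) \<union> K. (cmod (\<xi> g))^2) - (\<Sum>g\<in>K. (cmod (\<xi> g))^2)"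
      by (subst sum.union_disjoint) (use G K in auto)
    also have "\<dots> \<le> W - (\<Sum>g\<in>K. (cmod (\<xi> g))^2)"
      using ell2_fin_le[OF x, of "(G - K) \<union> K"] G K l2norm_sq[of \<xi>] unfolding W_def by simp
    also have "\<dots> \<le> \<delta>^2" using s1 s2 by simp
    finally show ?thesis .
  qed
  then have "l2norm (\<lambda>h. if h \<in> K then 0 else \<xi> h) \<le> \<delta>"
    using ell2_I'(2)[of "\<lambda>h. if h \<in> K then 0 else \<xi> h" \<delta>] d by simp
  then show ?thesis using K by blast
qed

lemma partial_Cr:
  assumes "finite F"
  shows "fourier_partial \<sigma> x F \<in> twisted_Cr \<sigma>"
  using assms
proof (induction F rule: finite_induct)
  case empty
  have "(\<lambda>\<xi> h. 0 * Lam \<sigma> 0 \<xi> h) \<in> twisted_Cr \<sigma>" by (intro twisted_Cr.scale twisted_Cr.gen)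
  then show ?case by (simp add: fourier_partial_def)
next
  case (insert a F)
  have "(\<lambda>\<xi> h. (\<lambda>\<xi> h. fourier_coeff x a * Lam \<sigma> a \<xi> h) \<xi> h + fourier_partial \<sigma> x F \<xi> h) \<in> twisted_Cr \<sigma>"
    by (intro twisted_Cr.add twisted_Cr.scale twisted_Cr.gen insert.IH)
  then show ?case using insert.hyps by (simp add: fourier_partial_def)
qed

lemma diff_Cr:
  assumes "T \<in> twisted_Cr \<sigma>" "S \<in> twisted_Cr \<sigma>"
  shows "(\<lambda>\<xi> h. T \<xi> h - S \<xi> h) \<in> twisted_Cr \<sigma>"
proof -
  have "(\<lambda>\<xi> h. T \<xi> h + (\<lambda>\<xi> h. (-1) * S \<xi> h) \<xi> h) \<in> twisted_Cr \<sigma>"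
    by (intro twisted_Cr.add twisted_Cr.scale assms)
  then show ?thesis by simp
qed


lemma ell2_diff_le:
  assumes "\<xi> \<in> ell2" "\<eta> \<in> ell2"
  shows "l2norm (\<lambda>h. \<xi> h - \<eta> h) \<le> l2norm \<xi> + l2norm \<eta>"
  using ell2_add(2)[OF assms(1) ell2_scale(1)[OF assms(2), of "-1"]] ell2_scale(2)[OF assms(2), of "-1"]
  by simp

lemma good_dlt:
  assumes s: "normalized_2cocycle \<sigma>" and Y: "good \<sigma> Y"
  shows "l2norm (Y (dlt k)) = l2norm (Y (dlt 0))"
proof -
  have u: "unimod \<sigma>" using s by (rule normalized_unimod)
  have Yb: "bounded_op Y" "linop Y" "commr \<sigma> Y" using Y by (auto simp: good_def)
  have uu: "\<And>x y. \<sigma> x y * cnj (\<sigma> x y) = 1" using u unfolding unimod_def by (simp add: unimod_cnj)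
  have dd: "dlt k = (\<lambda>h. \<sigma> k (-k) * rho \<sigma> (-k) (dlt 0) h)"
  proof
    fix h
    have "(h + - k = 0) = (h = k)" by (metis add_minus_cancel add_right_cancel right_minus)
    then show "dlt k h = \<sigma> k (-k) * rho \<sigma> (-k) (dlt 0) h"
      by (auto simp: dlt_def rho_def uu)
  qed
  have r0: "rho \<sigma> (-k) (dlt 0) \<in> ell2" by (rule rho_iso(1)[OF u dlt_ell2(1)])
  have "Y (dlt k) = (\<lambda>h. \<sigma> k (-k) * Y (rho \<sigma> (-k) (dlt 0)) h)"
    unfolding dd by (rule lin_scale[OF Yb(2) Yb(1) r0])
  also have "Y (rho \<sigma> (-k) (dlt 0)) = rho \<sigma> (-k) (Y (dlt 0))"
    using Yb(3) dlt_ell2(1)[of 0] unfolding commr_def by blast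
  finally have e: "Y (dlt k) = (\<lambda>h. \<sigma> k (-k) * rho \<sigma> (-k) (Y (dlt 0)) h)" .
  have y0: "Y (dlt 0) \<in> ell2" by (rule bounded_opD[OF Yb(1) dlt_ell2(1)])
  show ?thesis unfolding e
    using ell2_scale(2)[OF rho_iso(1)[OF u y0]] rho_iso(2)[OF u y0] u by (simp add: unimod_def)
qed

lemma Y_dlt0:
  assumes s: "normalized_2cocycle \<sigma>" and F: "finite F"
  shows "(\<lambda>\<xi> h. fourier_partial \<sigma> x F \<xi> h - x \<xi> h) (dlt 0) = (\<lambda>h. (-1) * (if h \<in> F then 0 else fourier_coeff x h))"
proof
  fix h
  have L: "Lam \<sigma> g (dlt 0) h = (if h = g then 1 else 0)" for g
  proof -
    have "(-g + h = 0) = (h = g)" by (metis add_minus_cancel neg_eq_iff_add_eq_0 minus_minus)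
    then show ?thesis using s by (auto simp: Lam_def dlt_def normalized_2cocycle_def)
  qed
  have d: "delta_e = dlt 0" by (simp add: delta_e_def dlt_def fun_eq_iff)
  have "fourier_partial \<sigma> x F (dlt 0) h = (\<Sum>g\<in>F. fourier_coeff x g * (if h = g then 1 else 0))"
    by (simp add: fourier_partial_def L)
  also have "\<dots> = (\<Sum>g\<in>F. if g = h then fourier_coeff x g else 0)"
    by (rule sum.cong) auto
  also have "\<dots> = (if h \<in> F then fourier_coeff x h else 0)"
    using F by (simp add: sum.delta)
  finally show "fourier_partial \<sigma> x F (dlt 0) h - x (dlt 0) h = (-1) * (if h \<in> F then 0 else fourier_coeff x h)"
    by (simp add: fourier_coeff_def d)
qed


lemma delta_e_dlt: "delta_e = dlt 0"
  by (simp add: delta_e_def dlt_def)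

lemma approx_bound:
  assumes s: "normalized_2cocycle \<sigma>" and x: "x \<in> twisted_Cr \<sigma>" and F: "finite F" and tau: "\<tau> \<ge> 0"
    and H: "\<And>F' \<zeta>. finite F' \<Longrightarrow> F \<subseteq> F' \<Longrightarrow> \<zeta> \<in> ell2 \<Longrightarrow>
              l2norm (Comb \<sigma> (fourier_coeff x) (F' - F) \<zeta>) \<le> \<tau> * l2norm \<zeta>"
  shows "opnorm (\<lambda>\<xi> h. fourier_partial \<sigma> x F \<xi> h - x \<xi> h) \<le> \<tau>"
proof -
  have u: "unimod \<sigma>" using s by (rule normalized_unimod)
  define f where "f = fourier_coeff x"
  define Y where "Y F' = (\<lambda>\<xi> h. fourier_partial \<sigma> x F' \<xi> h - x \<xi> h)" for F'
  have gY: "good \<sigma> (Y F')" if "finite F'" for F'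
    unfolding Y_def by (rule twisted_good[OF s diff_Cr[OF partial_Cr[OF that] x]])
  have Yb: "bounded_op (Y F')" "linop (Y F')" if "finite F'" for F'
    using gY[OF that] by (auto simp: good_def)
  have xb: "bounded_op x" using twisted_good[OF s x] by (simp add: good_def)
  have fe: "f \<in> ell2" unfolding f_def fourier_coeff_def
    by (rule bounded_opD[OF xb]) (unfold delta_e_dlt, rule dlt_ell2(1))
  have Y0: "l2norm (Y F' (dlt k)) = l2norm (\<lambda>h. if h \<in> F' then 0 else f h)" if "finite F'" for F' k
  proof -
    have "l2norm (Y F' (dlt k)) = l2norm (Y F' (dlt 0))" by (rule good_dlt[OF s gY[OF that]])
    also have "Y F' (dlt 0) = (\<lambda>h. (-1) * (if h \<in> F' then 0 else f h))"
      unfolding Y_def f_def by (rule Y_dlt0[OF s that])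
    also have "l2norm \<dots> = l2norm (\<lambda>h. if h \<in> F' then 0 else f h)"
      by (simp add: l2norm_def)
    finally show ?thesis .
  qed
  have split: "Y F \<zeta> = (\<lambda>h. Y F' \<zeta> h - Comb \<sigma> f (F' - F) \<zeta> h)" if "finite F'" "F \<subseteq> F'" for F' \<zeta>
  proof
    fix h
    have "fourier_partial \<sigma> x F' \<zeta> h = Comb \<sigma> f (F' - F) \<zeta> h + fourier_partial \<sigma> x F \<zeta> h"
      unfolding fourier_partial_def Comb_def f_def by (rule sum.subset_diff[OF that(2) that(1)])
    then show "Y F \<zeta> h = Y F' \<zeta> h - Comb \<sigma> f (F' - F) \<zeta> h" by (simp add: Y_def)
  qed
  have step1: "l2norm (Y F \<zeta>) \<le> \<tau> * l2norm \<zeta>"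
    if z: "\<zeta> \<in> ell2" "finite K" "\<And>h. h \<notin> K \<Longrightarrow> \<zeta> h = 0" for \<zeta> K
  proof (rule field_le_epsilon)
    fix e :: real assume e: "e > 0"
    define C where "C = (\<Sum>k\<in>K. cmod (\<zeta> k))"
    have C0: "C \<ge> 0" unfolding C_def by (simp add: sum_nonneg)
    define \<delta> where "\<delta> = e / (C + 1)"
    have d: "\<delta> > 0" using e C0 by (simp add: \<delta>_def)
    obtain F' where F': "finite F'" "F \<subseteq> F'" "l2norm (\<lambda>h. if h \<in> F' then 0 else f h) \<le> \<delta>"
      using ell2_tail[OF fe F d] by blast
    have zs: "\<zeta> = (\<lambda>h. \<Sum>k\<in>K. \<zeta> k * dlt k h)"
    proof
      fix h
      have "(\<Sum>k\<in>K. \<zeta> k * dlt k h) = (\<Sum>k\<in>K. if k = h then \<zeta> k else 0)"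
        by (rule sum.cong) (auto simp: dlt_def)
      also have "\<dots> = \<zeta> h" using z(2,3) by (simp add: sum.delta)
      finally show "\<zeta> h = (\<Sum>k\<in>K. \<zeta> k * dlt k h)" by simp
    qed
    have YF'z: "Y F' \<zeta> = (\<lambda>h. \<Sum>k\<in>K. \<zeta> k * Y F' (dlt k) h)"
      by (subst zs, rule lin_sum[OF Yb(2)[OF F'(1)] Yb(1)[OF F'(1)] z(2)]) (rule dlt_ell2(1))
    have mem: "(\<lambda>h. \<zeta> k * Y F' (dlt k) h) \<in> ell2" for k
      by (rule ell2_scale(1)[OF bounded_opD[OF Yb(1)[OF F'(1)] dlt_ell2(1)]])
    have "l2norm (Y F' \<zeta>) \<le> (\<Sum>k\<in>K. l2norm (\<lambda>h. \<zeta> k * Y F' (dlt k) h))"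
      unfolding YF'z using ell2_sum[OF z(2), of "\<lambda>k h. \<zeta> k * Y F' (dlt k) h"] mem by blast
    also have "\<dots> = (\<Sum>k\<in>K. cmod (\<zeta> k) * l2norm (\<lambda>h. if h \<in> F' then 0 else f h))"
      by (rule sum.cong[OF refl])
        (simp add: ell2_scale(2)[OF bounded_opD[OF Yb(1)[OF F'(1)] dlt_ell2(1)]] Y0[OF F'(1)])
    also have "\<dots> = C * l2norm (\<lambda>h. if h \<in> F' then 0 else f h)"
      unfolding C_def by (simp add: sum_distrib_right)
    also have "\<dots> \<le> C * \<delta>" by (rule mult_left_mono[OF F'(3) C0])
    also have "\<dots> \<le> e" using e C0 by (simp add: \<delta>_def field_simps)
    finally have A: "l2norm (Y F' \<zeta>) \<le> e" .
    have "l2norm (Y F \<zeta>) = l2norm (\<lambda>h. Y F' \<zeta> h - Comb \<sigma> f (F' - F) \<zeta> h)"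
      using split[OF F'(1,2)] by simp
    also have "\<dots> \<le> l2norm (Y F' \<zeta>) + l2norm (Comb \<sigma> f (F' - F) \<zeta>)"
      by (rule ell2_diff_le[OF bounded_opD[OF Yb(1)[OF F'(1)] z(1)] Comb_bound(1)[OF u _ z(1)]])
        (use F' in auto)
    also have "\<dots> \<le> e + \<tau> * l2norm \<zeta>"
      using A H[OF F'(1,2) z(1)] unfolding f_def by simp
    finally show "l2norm (Y F \<zeta>) \<le> \<tau> * l2norm \<zeta> + e" by simp
  qed
  have "opnorm (Y F) \<le> \<tau>"
  proof (rule opnorm_le)
    fix \<xi> :: "'a \<Rightarrow> complex" assume x: "\<xi> \<in> ell2"
    show "l2norm (Y F \<xi>) \<le> \<tau> * l2norm \<xi>"
    proof (rule field_le_epsilon)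
      fix e :: real assume e: "e > 0"
      define M where "M = opnorm (Y F)"
      have M0: "M \<ge> 0" unfolding M_def by (rule opnorm_nonneg[OF Yb(1)[OF F]])
      define \<delta> where "\<delta> = e / (M + 1)"
      have d: "\<delta> > 0" using e M0 by (simp add: \<delta>_def)
      obtain K where K: "finite K" "l2norm (\<lambda>h. if h \<in> K then 0 else \<xi> h) \<le> \<delta>"
        using ell2_tail[OF x finite.emptyI d] by blast
      define \<xi>1 where "\<xi>1 = (\<lambda>h. if h \<in> K then \<xi> h else 0)"
      define \<xi>2 where "\<xi>2 = (\<lambda>h. if h \<in> K then 0 else \<xi> h)"
      have m1: "\<xi>1 \<in> ell2" "l2norm \<xi>1 \<le> 1 * l2norm \<xi>"
        using ell2_mono[OF x, of \<xi>1 1] by (auto simp: \<xi>1_def)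
      have m2: "\<xi>2 \<in> ell2" using ell2_mono(1)[OF x, of \<xi>2 1] by (auto simp: \<xi>2_def)
      have "\<xi> = (\<lambda>h. \<xi>1 h + \<xi>2 h)" by (auto simp: \<xi>1_def \<xi>2_def)
      then have "Y F \<xi> = (\<lambda>h. Y F \<xi>1 h + Y F \<xi>2 h)"
        using lin_add[OF Yb(2)[OF F] m1(1) m2] by simp
      then have "l2norm (Y F \<xi>) \<le> l2norm (Y F \<xi>1) + l2norm (Y F \<xi>2)"
        using ell2_add(2)[OF bounded_opD[OF Yb(1)[OF F] m1(1)] bounded_opD[OF Yb(1)[OF F] m2]] by simp
      also have "\<dots> \<le> \<tau> * l2norm \<xi> + M * \<delta>"
      proof (rule add_mono)
        have "l2norm (Y F \<xi>1) \<le> \<tau> * l2norm \<xi>1"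
          by (rule step1[OF m1(1) K(1)]) (simp add: \<xi>1_def)
        also have "\<dots> \<le> \<tau> * l2norm \<xi>" using m1(2) tau by (simp add: mult_left_mono)
        finally show "l2norm (Y F \<xi>1) \<le> \<tau> * l2norm \<xi>" .
        have "l2norm (Y F \<xi>2) \<le> M * l2norm \<xi>2" unfolding M_def by (rule opnorm_bound[OF Yb(1)[OF F] m2])
        also have "\<dots> \<le> M * \<delta>" using K(2) M0 by (simp add: \<xi>2_def mult_left_mono)
        finally show "l2norm (Y F \<xi>2) \<le> M * \<delta>" .
      qed
      also have "M * \<delta> \<le> e" using e M0 by (simp add: \<delta>_def field_simps)
      finally show "l2norm (Y F \<xi>) \<le> \<tau> * l2norm \<xi> + e" by simp
    qed
  qed
  then show ?thesis by (simp add: Y_def)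
qed

lemma annulus:
  fixes L :: "'g::group_add \<Rightarrow> real" and f :: "'g \<Rightarrow> complex"
  assumes u: "unimod \<sigma>" and L: "proper_length L"
    and psi: "\<And>n. \<psi> n > 0" and wge: "\<And>g n. real n < L g \<Longrightarrow> \<psi> n \<le> w g"
    and wnn: "\<And>g. w g \<ge> 0"
    and W: "(\<lambda>g. (cmod (f g))^2 * w g) summable_on UNIV"
    and A: "summable (\<lambda>n. haagerup_content (ball_L L (real n + 1)) / sqrt (\<psi> n))"
    and D: "finite D" "\<And>g. g \<in> D \<Longrightarrow> real N < L g" and z: "\<zeta> \<in> ell2"
  shows "l2norm (Comb \<sigma> f D \<zeta>) \<le>
    sqrt (infsum (\<lambda>g. (cmod (f g))^2 * w g) UNIV) *
    (\<Sum>i. haagerup_content (ball_L L (real (i + N) + 1)) / sqrt (\<psi> (i + N))) * l2norm \<zeta>"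
proof -
  define Wt where "Wt = infsum (\<lambda>g. (cmod (f g))^2 * w g) UNIV"
  define a where "a n = haagerup_content (ball_L L (real n + 1)) / sqrt (\<psi> n)" for n
  define B where "B n = ball_L L (real n + 1)" for n
  have Bfin: "finite (B n)" for n using L by (simp add: B_def ball_L_def proper_length_def)
  have a0: "a n \<ge> 0" for n unfolding a_def using haag_nonneg[OF Bfin[of n]] psi[of n] by (simp add: B_def)
  have Wt0: "Wt \<ge> 0" unfolding Wt_def by (rule infsum_nonneg) (simp add: wnn)
  define \<phi> where "\<phi> g = nat (\<lceil>L g\<rceil> - 1)" for g
  have phi: "N \<le> \<phi> g \<and> real (\<phi> g) < L g \<and> L g \<le> real (\<phi> g) + 1" if g: "g \<in> D" for g
  proof -
    have lg: "real N < L g" using D(2)[OF g] .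
    have c: "of_int \<lceil>L g\<rceil> - 1 < L g" "L g \<le> of_int \<lceil>L g\<rceil>" using ceiling_correct[of "L g"] by auto
    have "real N < of_int \<lceil>L g\<rceil>" using lg c by linarith
    then have ci: "int N + 1 \<le> \<lceil>L g\<rceil>" by linarith
    then have e: "real (\<phi> g) = of_int \<lceil>L g\<rceil> - 1" unfolding \<phi>_def by simp
    show ?thesis using ci c e unfolding \<phi>_def by auto
  qed
  define An where "An n = {g \<in> D. \<phi> g = n}" for n
  have AnB: "An n \<subseteq> B n" for n using phi by (auto simp: An_def B_def ball_L_def)
  have decomp: "Comb \<sigma> f D \<zeta> = (\<lambda>h. \<Sum>n\<in>\<phi> ` D. Comb \<sigma> f (An n) \<zeta> h)"
  proof
    fix h
    show "Comb \<sigma> f D \<zeta> h = (\<Sum>n\<in>\<phi> ` D. Comb \<sigma> f (An n) \<zeta> h)"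
      unfolding Comb_def An_def by (rule sum.group[symmetric]) (use D(1) in auto)
  qed
  have L2b: "L2_set (\<lambda>g. cmod (f g)) (An n) \<le> sqrt Wt / sqrt (\<psi> n)" for n
  proof -
    have fin: "finite (An n)" using D(1) by (simp add: An_def)
    have "(\<Sum>g\<in>An n. (cmod (f g))^2) \<le> (\<Sum>g\<in>An n. (cmod (f g))^2 * w g / \<psi> n)"
    proof (rule sum_mono)
      fix g assume g: "g \<in> An n"
      then have "\<psi> n \<le> w g" using phi[of g] wge by (auto simp: An_def)
      then have "1 \<le> w g / \<psi> n" using psi[of n] by simp
      then have "(cmod (f g))^2 * 1 \<le> (cmod (f g))^2 * (w g / \<psi> n)" by (rule mult_left_mono) simp
      then show "(cmod (f g))^2 \<le> (cmod (f g))^2 * w g / \<psi> n" by simp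
    qed
    also have "\<dots> = (\<Sum>g\<in>An n. (cmod (f g))^2 * w g) / \<psi> n" by (simp add: sum_divide_distrib)
    also have "\<dots> \<le> Wt / \<psi> n"
      unfolding Wt_def using psi[of n]
      by (intro divide_right_mono finite_sum_le_infsum[OF W fin]) (auto simp: wnn)
    finally have "(\<Sum>g\<in>An n. (cmod (f g))^2) \<le> Wt / \<psi> n" .
    then have "L2_set (\<lambda>g. cmod (f g)) (An n) \<le> sqrt (Wt / \<psi> n)"
      unfolding L2_set_def by (rule real_sqrt_le_mono)
    then show ?thesis by (simp add: real_sqrt_divide)
  qed
  have trm: "l2norm (Comb \<sigma> f (An n) \<zeta>) \<le> sqrt Wt * a n * l2norm \<zeta>" for n
  proof -
    have "l2norm (Comb \<sigma> f (An n) \<zeta>) \<le> haagerup_content (B n) * L2_set (\<lambda>g. cmod (f g)) (An n) * l2norm \<zeta>"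
      by (rule twisted_haag[OF u AnB Bfin z])
    also have "\<dots> \<le> haagerup_content (B n) * (sqrt Wt / sqrt (\<psi> n)) * l2norm \<zeta>"
      by (intro mult_right_mono mult_left_mono L2b haag_nonneg Bfin l2norm_nonneg)
    also have "\<dots> = sqrt Wt * a n * l2norm \<zeta>" by (simp add: a_def B_def)
    finally show ?thesis .
  qed
  have fD: "finite (\<phi> ` D)" using D(1) by simp
  have "l2norm (Comb \<sigma> f D \<zeta>) \<le> (\<Sum>n\<in>\<phi> ` D. l2norm (Comb \<sigma> f (An n) \<zeta>))"
    unfolding decomp using ell2_sum[OF fD, of "\<lambda>n. Comb \<sigma> f (An n) \<zeta>"] Comb_bound(1)[OF u _ z] D(1)
    by (simp add: An_def)
  also have "\<dots> \<le> (\<Sum>n\<in>\<phi> ` D. sqrt Wt * a n * l2norm \<zeta>)" by (rule sum_mono) (rule trm)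
  also have "\<dots> = sqrt Wt * (\<Sum>n\<in>\<phi> ` D. a n) * l2norm \<zeta>"
    by (simp add: sum_distrib_left sum_distrib_right)
  also have "\<dots> \<le> sqrt Wt * (\<Sum>i. a (i + N)) * l2norm \<zeta>"
  proof -
    have inj: "inj_on (\<lambda>n. n - N) (\<phi> ` D)"
    proof (rule inj_onI, clarify)
      fix x y assume xy: "x \<in> D" "y \<in> D" "\<phi> x - N = \<phi> y - N"
      then have "N \<le> \<phi> x" "N \<le> \<phi> y" using phi by auto
      then show "\<phi> x = \<phi> y" using xy(3) by linarith
    qed
    have "(\<Sum>n\<in>\<phi> ` D. a n) = (\<Sum>i\<in>(\<lambda>n. n - N) ` \<phi> ` D. a (i + N))"
      by (subst sum.reindex[OF inj]) (use phi in \<open>auto intro!: sum.cong\<close>)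
    also have "\<dots> \<le> (\<Sum>i. a (i + N))"
      by (rule sum_le_suminf) (use summable_ignore_initial_segment[OF A[folded a_def]] a0 fD in auto)
    finally show ?thesis
      using Wt0 by (intro mult_right_mono mult_left_mono l2norm_nonneg) simp_all
  qed
  finally show ?thesis by (simp add: Wt_def a_def)
qed


lemma main_conv:
  fixes L :: "'g::group_add \<Rightarrow> real"
  assumes s: "normalized_2cocycle \<sigma>" and x: "x \<in> twisted_Cr \<sigma>" and L: "proper_length L"
    and psi: "\<And>n. \<psi> n > 0" and wge: "\<And>g n. real n < L g \<Longrightarrow> \<psi> n \<le> w g"
    and wnn: "\<And>g. w g \<ge> 0"
    and W: "(\<lambda>g. (cmod (fourier_coeff x g))^2 * w g) summable_on UNIV"
    and A: "summable (\<lambda>n. haagerup_content (ball_L L (real n + 1)) / sqrt (\<psi> n))"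
  shows "fourier_series_converges \<sigma> x"
  unfolding fourier_series_converges_def
proof (rule tendstoI)
  fix e :: real assume e: "e > 0"
  have u: "unimod \<sigma>" using s by (rule normalized_unimod)
  define Wt where "Wt = infsum (\<lambda>g. (cmod (fourier_coeff x g))^2 * w g) UNIV"
  define a where "a n = haagerup_content (ball_L L (real n + 1)) / sqrt (\<psi> n)" for n
  have a0: "a n \<ge> 0" for n
  proof -
    have "finite (ball_L L (real n + 1))" using L by (simp add: ball_L_def proper_length_def)
    then have "haagerup_content (ball_L L (real n + 1)) \<ge> 0" by (rule haag_nonneg)
    then show ?thesis unfolding a_def using psi[of n] by (simp add: divide_nonneg_pos)
  qed
  have Wt0: "Wt \<ge> 0" unfolding Wt_def by (rule infsum_nonneg) (simp add: wnn)
  define r where "r = e / (2 * (sqrt Wt + 1))"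
  have r: "r > 0"
  proof -
    have "2 * (sqrt Wt + 1) > 0" using Wt0 by (simp add: add_nonneg_pos)
    then show ?thesis unfolding r_def by (rule divide_pos_pos[OF e])
  qed
  obtain N where N: "norm (\<Sum>i. a (i + N)) < r"
    using suminf_exist_split[OF r A[folded a_def]] by blast
  define \<tau> where "\<tau> = sqrt Wt * (\<Sum>i. a (i + N))"
  have S0: "(\<Sum>i. a (i + N)) \<ge> 0"
    by (rule suminf_nonneg[OF summable_ignore_initial_segment[OF A[folded a_def]]]) (rule a0)
  have tau0: "\<tau> \<ge> 0" unfolding \<tau>_def using S0 Wt0 by simp
  have "\<tau> \<le> sqrt Wt * r" unfolding \<tau>_def using N S0 Wt0 by (intro mult_left_mono) auto
  also have "\<dots> \<le> (sqrt Wt + 1) * r" using r by (simp add: mult_right_mono)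
  also have "\<dots> = e / 2"
  proof -
    have "sqrt Wt + 1 \<noteq> 0" using Wt0 by (metis add_nonneg_pos real_sqrt_ge_zero zero_less_one less_irrefl)
    then show ?thesis unfolding r_def by (simp add: field_simps)
  qed
  finally have tau_e: "\<tau> < e" using e by simp
  define X where "X = ball_L L (real N)"
  have X: "finite X" using L by (simp add: X_def ball_L_def proper_length_def)
  show "\<forall>\<^sub>F F in finite_subsets_at_top UNIV.
          dist (opnorm (\<lambda>\<xi> h. fourier_partial \<sigma> x F \<xi> h - x \<xi> h)) 0 < e"
    unfolding eventually_finite_subsets_at_top
  proof (intro exI[of _ X] conjI allI impI)
    show "finite X" by (rule X)
    show "X \<subseteq> UNIV" by simp
    fix F assume F: "finite F \<and> X \<subseteq> F \<and> F \<subseteq> UNIV"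
    have ob: "opnorm (\<lambda>\<xi> h. fourier_partial \<sigma> x F \<xi> h - x \<xi> h) \<le> \<tau>"
    proof (rule approx_bound[OF s x _ tau0])
      show "finite F" using F by simp
      fix F' :: "'g set" and \<zeta> :: "'g \<Rightarrow> complex" assume F': "finite F'" "F \<subseteq> F'" and z: "\<zeta> \<in> ell2"
      have D: "finite (F' - F)" "\<And>g. g \<in> F' - F \<Longrightarrow> real N < L g"
      proof -
        show "finite (F' - F)" using F' by simp
        fix g assume "g \<in> F' - F"
        then have "g \<notin> X" using F by auto
        then show "real N < L g" by (simp add: X_def ball_L_def)
      qed
      show "l2norm (Comb \<sigma> (fourier_coeff x) (F' - F) \<zeta>) \<le> \<tau> * l2norm \<zeta>"
        using annulus[OF u L psi wge wnn W A D z] unfolding \<tau>_def Wt_def a_def by simp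
    qed
    have "bounded_op (\<lambda>\<xi> h. fourier_partial \<sigma> x F \<xi> h - x \<xi> h)"
      using twisted_good[OF s diff_Cr[OF partial_Cr x]] F by (simp add: good_def)
    then have "opnorm (\<lambda>\<xi> h. fourier_partial \<sigma> x F \<xi> h - x \<xi> h) \<ge> 0" by (rule opnorm_nonneg)
    then show "dist (opnorm (\<lambda>\<xi> h. fourier_partial \<sigma> x F \<xi> h - x \<xi> h)) 0 < e"
      using ob tau_e by (simp add: dist_real_def)
  qed
qed

lemma poly_summable:
  fixes L :: "'g::group_add \<Rightarrow> real"
  assumes L: "proper_length L" and K: "K > 0" and p: "p > 0"
    and bnd: "\<forall>r\<ge>0. haagerup_content (ball_L L r) \<le> K * (1 + r) powr p"
  shows "summable (\<lambda>n. haagerup_content (ball_L L (real n + 1)) / sqrt ((1 + real n) powr (2 * p + 4)))"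
proof (rule summable_comparison_test_ev)
  have s1: "summable (\<lambda>n. real (n + 1) powr (-2))"
    using summable_ignore_initial_segment[of "\<lambda>n. real n powr (-2)" 1] summable_real_powr_iff[of "-2"]
    by simp
  show "summable (\<lambda>n. K * 2 powr p * real (n + 1) powr (-2))"
    by (rule summable_mult[OF s1])
  show "\<forall>\<^sub>F n in sequentially. norm (haagerup_content (ball_L L (real n + 1)) / sqrt ((1 + real n) powr (2 * p + 4)))
          \<le> K * 2 powr p * real (n + 1) powr (-2)"
  proof (rule always_eventually, rule allI)
    fix n :: nat
    define y where "y = 1 + real n"
    have y: "y \<ge> 1" by (simp add: y_def)
    have fin: "finite (ball_L L (real n + 1))" using L by (simp add: ball_L_def proper_length_def)
    have c0: "haagerup_content (ball_L L (real n + 1)) \<ge> 0" by (rule haag_nonneg[OF fin])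
    have sq: "sqrt (y powr (2 * p + 4)) = y powr (p + 2)"
    proof -
      have e1: "(2 * p + 4) / 2 = p + 2" by simp
      have e2: "y powr ((2 * p + 4) / 2) = sqrt (y powr (2 * p + 4))"
        by (rule powr_half_sqrt_powr) (use y in simp)
      show ?thesis using e2 unfolding e1 by (rule sym)
    qed
    have c: "haagerup_content (ball_L L (real n + 1)) \<le> K * (1 + y) powr p"
      using bnd[rule_format, of "real n + 1"] by (simp add: y_def add.commute)
    have "(1 + y) powr p \<le> (2 * y) powr p" using y p by (intro powr_mono2) auto
    also have "\<dots> = 2 powr p * y powr p" using y by (simp add: powr_mult)
    finally have c2: "haagerup_content (ball_L L (real n + 1)) \<le> K * (2 powr p * y powr p)"
      using c K by (meson mult_left_mono less_imp_le order_trans)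
    have ypos: "y powr (p + 2) > 0" using y by simp
    have "norm (haagerup_content (ball_L L (real n + 1)) / sqrt ((1 + real n) powr (2 * p + 4)))
        = haagerup_content (ball_L L (real n + 1)) / y powr (p + 2)"
      using c0 sq by (simp add: y_def)
    also have "\<dots> \<le> K * (2 powr p * y powr p) / y powr (p + 2)"
      by (rule divide_right_mono[OF c2]) (use ypos in simp)
    also have "\<dots> = K * 2 powr p * (y powr p / y powr (p + 2))" by simp
    also have "y powr p / y powr (p + 2) = y powr (-2)"
      using powr_diff[of y p "p + 2"] by simp
    also have "y = real (n + 1)" by (simp add: y_def)
    finally show "norm (haagerup_content (ball_L L (real n + 1)) / sqrt ((1 + real n) powr (2 * p + 4)))
          \<le> K * 2 powr p * real (n + 1) powr (-2)" .
  qed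
qed

lemma subexp_summable:
  fixes L :: "'g::group_add \<Rightarrow> real"
  assumes L: "proper_length L" and sub: "subexp_H_growth L" and t: "t > 0"
  shows "summable (\<lambda>n. haagerup_content (ball_L L (real n + 1)) / sqrt (exp (t * real n)))"
proof -
  have b: "exp (t / 4) > 1" using t by simp
  obtain r0 where r0: "\<And>r. r \<ge> r0 \<Longrightarrow> haagerup_content (ball_L L r) < exp (t / 4) powr r"
    using sub b unfolding subexp_H_growth_def by blast
  show ?thesis
  proof (rule summable_comparison_test_ev)
    show "summable (\<lambda>n. exp (t / 4) * exp (- t / 4) ^ n)"
      by (rule summable_mult, rule summable_geometric) (use t in simp)
    have "\<forall>\<^sub>F n in sequentially. n \<ge> nat \<lceil>r0\<rceil>" by (rule eventually_ge_at_top)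
    then show "\<forall>\<^sub>F n in sequentially. norm (haagerup_content (ball_L L (real n + 1)) / sqrt (exp (t * real n)))
        \<le> exp (t / 4) * exp (- t / 4) ^ n"
    proof (rule eventually_mono)
      fix n assume n: "nat \<lceil>r0\<rceil> \<le> n"
      have rn: "real n + 1 \<ge> r0" using n by linarith
      have fin: "finite (ball_L L (real n + 1))" using L by (simp add: ball_L_def proper_length_def)
      have c0: "haagerup_content (ball_L L (real n + 1)) \<ge> 0" by (rule haag_nonneg[OF fin])
      have c: "haagerup_content (ball_L L (real n + 1)) \<le> exp (t / 4 * (real n + 1))"
        using r0[OF rn] by (simp add: powr_def mult_ac)
      have sq: "sqrt (exp (t * real n)) = exp (t * real n / 2)"
        by (metis real_sqrt_eq_iff exp_gt_zero less_imp_le mult_exp_exp real_sqrt_unique field_sum_of_halves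
              power2_eq_square)
      have "norm (haagerup_content (ball_L L (real n + 1)) / sqrt (exp (t * real n)))
          = haagerup_content (ball_L L (real n + 1)) / exp (t * real n / 2)"
        using c0 sq by simp
      also have "\<dots> \<le> exp (t / 4 * (real n + 1)) / exp (t * real n / 2)"
        by (rule divide_right_mono[OF c]) simp
      also have "\<dots> = exp (t / 4) * exp (- t / 4 * real n)"
        by (simp add: exp_diff[symmetric] exp_add[symmetric] algebra_simps)
      also have "exp (- t / 4 * real n) = exp (- t / 4) ^ n"
        by (simp add: exp_of_nat_mult[symmetric] mult.commute)
      finally show "norm (haagerup_content (ball_L L (real n + 1)) / sqrt (exp (t * real n)))
          \<le> exp (t / 4) * exp (- t / 4) ^ n" .
    qed
  qed
qed

theorem theorem3p15:
  fixes L :: "'g::{group_add, countable} \<Rightarrow> real"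
  assumes "proper_length L"
  shows "(poly_H_growth L \<longrightarrow>
           (\<exists>s>0. \<forall>\<sigma>. normalized_2cocycle \<sigma> \<longrightarrow>
              (\<forall>x\<in>twisted_Cr \<sigma>.
                 (\<lambda>g. (cmod (fourier_coeff x g))^2 * (1 + L g) powr s) summable_on UNIV
                 \<longrightarrow> fourier_series_converges \<sigma> x)))
       \<and> (subexp_H_growth L \<longrightarrow>
           (\<forall>\<sigma>. normalized_2cocycle \<sigma> \<longrightarrow>
              (\<forall>x\<in>twisted_Cr \<sigma>.
                 (\<exists>t>0. (\<lambda>g. (cmod (fourier_coeff x g))^2 * exp (t * L g)) summable_on UNIV)
                 \<longrightarrow> fourier_series_converges \<sigma> x)))"
proof (intro conjI impI)
  have L0: "\<And>g. L g \<ge> 0" using assms by (simp add: proper_length_def)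
  assume "poly_H_growth L"
  then obtain K p where K: "K > 0" and p: "p > 0"
    and bnd: "\<forall>r\<ge>0. haagerup_content (ball_L L r) \<le> K * (1 + r) powr p"
    unfolding poly_H_growth_def by blast
  show "\<exists>s>0. \<forall>\<sigma>. normalized_2cocycle \<sigma> \<longrightarrow>
              (\<forall>x\<in>twisted_Cr \<sigma>.
                 (\<lambda>g. (cmod (fourier_coeff x g))^2 * (1 + L g) powr s) summable_on UNIV
                 \<longrightarrow> fourier_series_converges \<sigma> x)"
  proof (intro exI[of _ "2 * p + 4"] conjI allI impI ballI)
    show "2 * p + 4 > 0" using p by simp
    fix \<sigma> x assume s: "normalized_2cocycle \<sigma>" and x: "x \<in> twisted_Cr \<sigma>"
      and W: "(\<lambda>g. (cmod (fourier_coeff x g))^2 * (1 + L g) powr (2 * p + 4)) summable_on UNIV"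
    show "fourier_series_converges \<sigma> x"
    proof (rule main_conv[OF s x assms, where \<psi>="\<lambda>n. (1 + real n) powr (2 * p + 4)"
          and w="\<lambda>g. (1 + L g) powr (2 * p + 4)"])
      show "\<And>n. (1 + real n) powr (2 * p + 4) > 0" by simp
      show "\<And>g n. real n < L g \<Longrightarrow> (1 + real n) powr (2 * p + 4) \<le> (1 + L g) powr (2 * p + 4)"
        using p by (intro powr_mono2) auto
      show "\<And>g. (1 + L g) powr (2 * p + 4) \<ge> 0" by simp
      show "(\<lambda>g. (cmod (fourier_coeff x g))^2 * (1 + L g) powr (2 * p + 4)) summable_on UNIV" by (rule W)
      show "summable (\<lambda>n. haagerup_content (ball_L L (real n + 1)) / sqrt ((1 + real n) powr (2 * p + 4)))"
        by (rule poly_summable[OF assms K p bnd])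
    qed
  qed
next
  assume sub: "subexp_H_growth L"
  show "\<forall>\<sigma>. normalized_2cocycle \<sigma> \<longrightarrow>
              (\<forall>x\<in>twisted_Cr \<sigma>.
                 (\<exists>t>0. (\<lambda>g. (cmod (fourier_coeff x g))^2 * exp (t * L g)) summable_on UNIV)
                 \<longrightarrow> fourier_series_converges \<sigma> x)"
  proof (intro allI impI ballI)
    fix \<sigma> x assume s: "normalized_2cocycle \<sigma>" and x: "x \<in> twisted_Cr \<sigma>"
      and ex: "\<exists>t>0. (\<lambda>g. (cmod (fourier_coeff x g))^2 * exp (t * L g)) summable_on UNIV"
    then obtain t where t: "t > 0" and W: "(\<lambda>g. (cmod (fourier_coeff x g))^2 * exp (t * L g)) summable_on UNIV"
      by blast
    show "fourier_series_converges \<sigma> x"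
    proof (rule main_conv[OF s x assms, where \<psi>="\<lambda>n. exp (t * real n)" and w="\<lambda>g. exp (t * L g)"])
      show "\<And>n. exp (t * real n) > 0" by simp
      show "\<And>g n. real n < L g \<Longrightarrow> exp (t * real n) \<le> exp (t * L g)"
        using t by simp
      show "\<And>g. exp (t * L g) \<ge> 0" by simp
      show "(\<lambda>g. (cmod (fourier_coeff x g))^2 * exp (t * L g)) summable_on UNIV" by (rule W)
      show "summable (\<lambda>n. haagerup_content (ball_L L (real n + 1)) / sqrt (exp (t * real n)))"
        by (rule subexp_summable[OF assms sub t])
    qed
  qed
qed

end
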